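(* For every integer $k\ge2$ there are isomorphisms of 2-species $$\mathcal C^\bullet_k\cong \mathcal C^\bullet_{k-1}\cdot\big(\mathbb E\circ(\mathcal C^\bullet_{k-1}+\mathcal C^\times_{k-1})\big),\qquad \mathcal C^\times_k\cong\big((\mathbb E-1)\circ\mathcal C^\times_{k-1}\big)\cdot\big(\mathbb E\circ\mathcal C^\bullet_{k-1}\big),$$ $$\mathcal C^\ell_{k-1}\cong \mathcal C^\bullet_k+\mathcal C^\times_k,$$ and for every $k\ge1$ there is an isomorphism $\mathcal C_k\cong(\mathbb E-1)\circ(\mathcal C^\bullet_k+\mathcal C^\times_k)$.
   Context: Let $V_1,V_2$ be disjoint finite sets, $V=V_1\sqcup V_2$. A semi-pointed partition of $(V_1,V_2)$ is a set partition of $V$ into nonempty blocks in which each block $B$ is either unpointed or pointed at one chosen element of $B\cap V_1$, subject to: a block contained in $V_1$ must be pointed, and a block contained in $V_2$ must be unpointed. $\Pi(V_1,V_2)$ is the set of semi-pointed partitions, ordered by: $P\le Q$ iff every block $b$ of $P$ is a union $q_1\cup\dots\cup q_r$ of blocks of $Q$, and if $b$ is pointed at $e$ then some $q_i$ is pointed at $e$, while if $b$ is unpointed then some $q_i$ is unpointed. Its greatest element $\hat1$ is the partition into singletons. Its minimal elements are the one-block partitions $m_v$, $v\in V_1$ (block $V$ pointed at $v$), and $m_\times$ (the unpointed block $V$, present when $V_2\neq\emptyset$). A $k$-multichain is a sequence $a_1\le\dots\le a_k$. A 2-species is a functor from pairs of finite sets with pairs of bijections to finite sets. Sum and product are defined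 by $(\mathcal F+\mathcal G)(I_1,I_2)=\mathcal F(I_1,I_2)\sqcup\mathcal G(I_1,I_2)$ and $(\mathcal F\cdot\mathcal G)(I,J)=\bigsqcup_{I=I_1\sqcup I_2,\,J=J_1\sqcup J_2}\mathcal F(I_1,J_1)\times\mathcal G(I_2,J_2)$. For a species $\mathcal E$ and a 2-species $\mathcal F$ with $\mathcal F(\emptyset,\emptyset)=\emptyset$, the substitution is $(\mathcal E\circ\mathcal F)(I_1,I_2)=\bigsqcup_{\pi}\mathcal E(\pi)\times\prod_{J\in\pi}\mathcal F(J\cap I_1,J\cap I_2)$, where $\pi$ runs over the set partitions of $I_1\sqcup I_2$. $\mathbb E$ is the species of sets ($\mathbb E(V)=\{V\}$), and $\mathbb E-1$ is the species of nonempty sets. For $k\ge1$ the 2-species are as follows: - $\mathcal C_k(V_1,V_2)$ is the set of $k$-multichains in $\Pi(V_1,V_2)$, empty when $V_1=V_2=\emptyset$; - $\mathcal C^\bullet_k(V_1,V_2)$ is the set of those $k$-multichains whose first element is some $m_v$; - $\mathcal C^\times_k(V_1,V_2)$ is the set of those whose first element is $m_\times$; - $\mathcal C^\ell_k(V_1,V_2)$ is the set of pairs $(m,c)$ with $m$ a minimal element of $\Pi(V_1,V_2)$ and $c$ a $k$-multichain in the interval $[m,\hat1]$. *)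

theory Defs
  imports Main
begin

text \<open>A 2-species is represented by its carrier
  (V1 V2 \<mapsto> set of structures on (V1,V2)) together with its transport of structures
  along a relabelling function sigma (only the restriction of sigma to V1 \<union> V2 matters).\<close>

type_synonym ('a, 's) species = "('a set \<Rightarrow> 'a set \<Rightarrow> 's set) \<times> (('a \<Rightarrow> 'a) \<Rightarrow> 's \<Rightarrow> 's)"

definition admissible :: "'a set \<Rightarrow> 'a set \<Rightarrow> bool" where
  "admissible V1 V2 \<longleftrightarrow> finite V1 \<and> finite V2 \<and> V1 \<inter> V2 = {}"

definition species_iso :: "('a, 's) species \<Rightarrow> ('a, 't) species \<Rightarrow> bool" where
  "species_iso F G \<longleftrightarrow>
     (\<exists>\<phi> :: 'a set \<Rightarrow> 'a set \<Rightarrow> 's \<Rightarrow> 't.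
        (\<forall>V1 V2. admissible V1 V2 \<longrightarrow> bij_betw (\<phi> V1 V2) (fst F V1 V2) (fst G V1 V2)) \<and>
        (\<forall>V1 V2 W1 W2 \<sigma>. admissible V1 V2 \<and> admissible W1 W2 \<and>
            bij_betw \<sigma> V1 W1 \<and> bij_betw \<sigma> V2 W2 \<longrightarrow>
            (\<forall>s \<in> fst F V1 V2. \<phi> W1 W2 (snd F \<sigma> s) = snd G \<sigma> (\<phi> V1 V2 s))))"

definition is_setpart :: "'a set \<Rightarrow> 'a set set \<Rightarrow> bool" where
  "is_setpart V Bs \<longleftrightarrow> (\<forall>B\<in>Bs. B \<noteq> {}) \<and>
     (\<forall>B\<in>Bs. \<forall>B'\<in>Bs. B \<noteq> B' \<longrightarrow> B \<inter> B' = {}) \<and> \<Union>Bs = V"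

definition sp_sum :: "('a, 's) species \<Rightarrow> ('a, 't) species \<Rightarrow> ('a, 's + 't) species" where
  "sp_sum F G = ((\<lambda>V1 V2. Inl ` fst F V1 V2 \<union> Inr ` fst G V1 V2),
                 (\<lambda>\<sigma>. map_sum (snd F \<sigma>) (snd G \<sigma>)))"

definition sp_prod :: "('a, 's) species \<Rightarrow> ('a, 't) species \<Rightarrow> ('a, ('a set \<times> 'a set) \<times> 's \<times> 't) species" where
  "sp_prod F G = ((\<lambda>V1 V2. {((I1, J1), f, g) | I1 J1 f g.
                     I1 \<subseteq> V1 \<and> J1 \<subseteq> V2 \<and> f \<in> fst F I1 J1 \<and> g \<in> fst G (V1 - I1) (V2 - J1)}),
                  (\<lambda>\<sigma> ((I1, J1), f, g). ((\<sigma> ` I1, \<sigma> ` J1), snd F \<sigma> f, snd G \<sigma> g)))"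

text \<open>Substitution E o F: a set partition of V1 \<union> V2 together with an F-structure on each
  block J (on the pair (J \<inter> V1, J \<inter> V2)); encoded as the set of pairs (block, structure).\<close>
definition comp_E_carrier :: "('a, 's) species \<Rightarrow> 'a set \<Rightarrow> 'a set \<Rightarrow> ('a set \<times> 's) set set" where
  "comp_E_carrier F V1 V2 = {S. is_setpart (V1 \<union> V2) (fst ` S) \<and> inj_on fst S \<and>
                             (\<forall>(J, s) \<in> S. s \<in> fst F (J \<inter> V1) (J \<inter> V2))}"

definition comp_E_transport :: "('a, 's) species \<Rightarrow> ('a \<Rightarrow> 'a) \<Rightarrow> ('a set \<times> 's) set \<Rightarrow> ('a set \<times> 's) set" where
  "comp_E_transport F \<sigma> S = (\<lambda>(J, s). (\<sigma> ` J, snd F \<sigma> s)) ` S"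

definition sp_comp_E :: "('a, 's) species \<Rightarrow> ('a, ('a set \<times> 's) set) species" where
  "sp_comp_E F = (comp_E_carrier F, comp_E_transport F)"

text \<open>(E - 1) o F: same, but the partition must be nonempty.\<close>
definition sp_comp_E1 :: "('a, 's) species \<Rightarrow> ('a, ('a set \<times> 's) set) species" where
  "sp_comp_E1 F = ((\<lambda>V1 V2. {S \<in> comp_E_carrier F V1 V2. S \<noteq> {}}), comp_E_transport F)"

text \<open>A block is a pair (B, p): p = None means unpointed, p = Some e means pointed at e.\<close>
type_synonym 'a spp = "('a set \<times> 'a option) set"

definition SPP :: "'a set \<Rightarrow> 'a set \<Rightarrow> 'a spp set" where
  "SPP V1 V2 = {P. is_setpart (V1 \<union> V2) (fst ` P) \<and> inj_on fst P \<and>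
      (\<forall>(B, p) \<in> P. (\<forall>e. p = Some e \<longrightarrow> e \<in> B \<inter> V1) \<and>
                     (B \<subseteq> V1 \<longrightarrow> p \<noteq> None) \<and> (B \<subseteq> V2 \<longrightarrow> p = None))}"

definition sp_le :: "'a spp \<Rightarrow> 'a spp \<Rightarrow> bool" where
  "sp_le P Q \<longleftrightarrow> (\<forall>(b, p) \<in> P. \<exists>Qs \<subseteq> Q. b = \<Union>(fst ` Qs) \<and>
       (case p of Some e \<Rightarrow> (\<exists>q. (q, Some e) \<in> Qs) | None \<Rightarrow> (\<exists>q. (q, None) \<in> Qs)))"

definition hat1 :: "'a set \<Rightarrow> 'a set \<Rightarrow> 'a spp" where
  "hat1 V1 V2 = {({v}, Some v) | v. v \<in> V1} \<union> {({v}, None) | v. v \<in> V2}"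

definition mpt :: "'a set \<Rightarrow> 'a set \<Rightarrow> 'a \<Rightarrow> 'a spp" where
  "mpt V1 V2 v = {(V1 \<union> V2, Some v)}"

definition mcross :: "'a set \<Rightarrow> 'a set \<Rightarrow> 'a spp" where
  "mcross V1 V2 = {(V1 \<union> V2, None)}"

definition minimals :: "'a set \<Rightarrow> 'a set \<Rightarrow> 'a spp set" where
  "minimals V1 V2 = mpt V1 V2 ` V1 \<union> (if V2 \<noteq> {} then {mcross V1 V2} else {})"

definition interval :: "'a set \<Rightarrow> 'a set \<Rightarrow> 'a spp \<Rightarrow> 'a spp \<Rightarrow> 'a spp set" where
  "interval V1 V2 a b = {x \<in> SPP V1 V2. sp_le a x \<and> sp_le x b}"

definition multichain_in :: "'a spp set \<Rightarrow> nat \<Rightarrow> 'a spp list \<Rightarrow> bool" where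
  "multichain_in X k cs \<longleftrightarrow> length cs = k \<and> set cs \<subseteq> X \<and>
      (\<forall>i. Suc i < k \<longrightarrow> sp_le (cs ! i) (cs ! Suc i))"

definition relP :: "('a \<Rightarrow> 'a) \<Rightarrow> 'a spp \<Rightarrow> 'a spp" where
  "relP \<sigma> P = (\<lambda>(B, p). (\<sigma> ` B, map_option \<sigma> p)) ` P"

definition Ck :: "nat \<Rightarrow> ('a, 'a spp list) species" where
  "Ck k = ((\<lambda>V1 V2. if V1 = {} \<and> V2 = {} then {} else {cs. multichain_in (SPP V1 V2) k cs}),
           (\<lambda>\<sigma>. map (relP \<sigma>)))"

definition Cbul :: "nat \<Rightarrow> ('a, 'a spp list) species" where
  "Cbul k = ((\<lambda>V1 V2. {cs. multichain_in (SPP V1 V2) k cs \<and> cs \<noteq> [] \<and>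
                           (\<exists>v \<in> V1. hd cs = mpt V1 V2 v)}),
             (\<lambda>\<sigma>. map (relP \<sigma>)))"

definition Ctimes :: "nat \<Rightarrow> ('a, 'a spp list) species" where
  "Ctimes k = ((\<lambda>V1 V2. {cs. multichain_in (SPP V1 V2) k cs \<and> cs \<noteq> [] \<and>
                           hd cs = mcross V1 V2}),
               (\<lambda>\<sigma>. map (relP \<sigma>)))"

definition Cell :: "nat \<Rightarrow> ('a, 'a spp \<times> 'a spp list) species" where
  "Cell k = ((\<lambda>V1 V2. {(m, c). m \<in> minimals V1 V2 \<and>
                          multichain_in (interval V1 V2 m (hat1 V1 V2)) k c}),
             (\<lambda>\<sigma> (m, c). (relP \<sigma> m, map (relP \<sigma>) c)))"

end

theory Submission imports Defs begin

definition restr :: "'a set \<Rightarrow> 'a spp \<Rightarrow> 'a spp" where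
  "restr b Q = {x\<in>Q. fst x \<subseteq> b}"

definition covers :: "'a set \<Rightarrow> 'a spp \<Rightarrow> bool" where
  "covers b Q \<longleftrightarrow> \<Union>(fst ` restr b Q) = b"

lemma covers_step:
  assumes "covers b Q" "sp_le Q R" shows "covers b R"
  unfolding covers_def
proof
  show "\<Union>(fst ` restr b R) \<subseteq> b" unfolding restr_def by auto
  show "b \<subseteq> \<Union>(fst ` restr b R)"
  proof
    fix x assume "x \<in> b"
    with assms(1) have "x \<in> \<Union>(fst ` restr b Q)" unfolding covers_def by simp
    then obtain y where y: "y \<in> restr b Q" "x \<in> fst y" by auto
    obtain c p where "y = (c,p)" by (cases y)
    with y have cp: "(c,p) \<in> Q" "c \<subseteq> b" "x \<in> c" unfolding restr_def by auto
    from assms(2) cp(1) obtain Qs where Qs: "Qs \<subseteq> R" "c = \<Union>(fst ` Qs)"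
      unfolding sp_le_def by fastforce
    with cp obtain r where "r \<in> Qs" "x \<in> fst r" by auto
    with Qs cp show "x \<in> \<Union>(fst ` restr b R)" unfolding restr_def by blast
  qed
qed

lemma restr_le:
  assumes "sp_le Q R" shows "sp_le (restr b Q) (restr b R)"
  unfolding sp_le_def
proof (intro ballI, clarify)
  fix c p assume "(c,p) \<in> restr b Q"
  hence cp: "(c,p) \<in> Q" "c \<subseteq> b" unfolding restr_def by auto
  from assms cp(1) obtain Qs where Qs: "Qs \<subseteq> R" "c = \<Union>(fst ` Qs)"
      "(case p of Some e \<Rightarrow> (\<exists>q. (q, Some e) \<in> Qs) | None \<Rightarrow> (\<exists>q. (q, None) \<in> Qs))"
    unfolding sp_le_def by fastforce
  have "Qs \<subseteq> restr b R" using Qs cp unfolding restr_def by auto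
  with Qs show "\<exists>Qs\<subseteq>restr b R. c = \<Union> (fst ` Qs) \<and>
            (case p of None \<Rightarrow> \<exists>q. (q, None) \<in> Qs | Some e \<Rightarrow> \<exists>q. (q, Some e) \<in> Qs)"
    by blast
qed

lemma SPP_D:
  assumes "P \<in> SPP V1 V2"
  shows "\<And>B p. (B,p) \<in> P \<Longrightarrow> B \<noteq> {}"
    and "\<And>B p B' p'. (B,p) \<in> P \<Longrightarrow> (B',p') \<in> P \<Longrightarrow> B \<inter> B' \<noteq> {} \<Longrightarrow> B = B' \<and> p = p'"
    and "\<Union>(fst ` P) = V1 \<union> V2"
    and "\<And>B p e. (B,p) \<in> P \<Longrightarrow> p = Some e \<Longrightarrow> e \<in> B \<and> e \<in> V1"
    and "\<And>B p. (B,p) \<in> P \<Longrightarrow> B \<subseteq> V1 \<Longrightarrow> p \<noteq> None"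
    and "\<And>B p. (B,p) \<in> P \<Longrightarrow> B \<subseteq> V2 \<Longrightarrow> p = None"
    and "\<And>B p. (B,p) \<in> P \<Longrightarrow> B \<subseteq> V1 \<union> V2"
proof -
  from assms have sp: "is_setpart (V1 \<union> V2) (fst ` P)" and inj: "inj_on fst P"
    and pt: "\<forall>(B, p) \<in> P. (\<forall>e. p = Some e \<longrightarrow> e \<in> B \<inter> V1) \<and>
                     (B \<subseteq> V1 \<longrightarrow> p \<noteq> None) \<and> (B \<subseteq> V2 \<longrightarrow> p = None)"
    unfolding SPP_def by auto
  show "\<And>B p. (B,p) \<in> P \<Longrightarrow> B \<noteq> {}" using sp unfolding is_setpart_def by force
  show "\<And>B p B' p'. (B,p) \<in> P \<Longrightarrow> (B',p') \<in> P \<Longrightarrow> B \<inter> B' \<noteq> {} \<Longrightarrow> B = B' \<and> p = p'"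
  proof -
    fix B p B' p' assume a: "(B,p) \<in> P" "(B',p') \<in> P" "B \<inter> B' \<noteq> {}"
    hence "B = B'" using sp unfolding is_setpart_def by force
    with a inj show "B = B' \<and> p = p'" by (metis fst_conv inj_on_def prod.inject)
  qed
  show "\<Union>(fst ` P) = V1 \<union> V2" using sp unfolding is_setpart_def by auto
  show "\<And>B p e. (B,p) \<in> P \<Longrightarrow> p = Some e \<Longrightarrow> e \<in> B \<and> e \<in> V1" using pt by fastforce
  show "\<And>B p. (B,p) \<in> P \<Longrightarrow> B \<subseteq> V1 \<Longrightarrow> p \<noteq> None" using pt by fastforce
  show "\<And>B p. (B,p) \<in> P \<Longrightarrow> B \<subseteq> V2 \<Longrightarrow> p = None" using pt by fastforce
  show "\<And>B p. (B,p) \<in> P \<Longrightarrow> B \<subseteq> V1 \<union> V2" using sp unfolding is_setpart_def by force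
qed

lemma SPP_I:
  assumes a1: "\<And>B p. (B,p) \<in> P \<Longrightarrow> B \<noteq> {}"
    and a2: "\<And>B p B' p'. (B,p) \<in> P \<Longrightarrow> (B',p') \<in> P \<Longrightarrow> B \<inter> B' \<noteq> {} \<Longrightarrow> B = B' \<and> p = p'"
    and a3: "\<Union>(fst ` P) = V1 \<union> V2"
    and a4: "\<And>B p e. (B,p) \<in> P \<Longrightarrow> p = Some e \<Longrightarrow> e \<in> B \<and> e \<in> V1"
    and a5: "\<And>B p. (B,p) \<in> P \<Longrightarrow> B \<subseteq> V1 \<Longrightarrow> p \<noteq> None"
    and a6: "\<And>B p. (B,p) \<in> P \<Longrightarrow> B \<subseteq> V2 \<Longrightarrow> p = None"
  shows "P \<in> SPP V1 V2"
proof -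
  have n: "\<forall>B\<in>fst ` P. B \<noteq> {}"
  proof
    fix B assume "B \<in> fst ` P"
    then obtain p where "(B,p) \<in> P" by force
    thus "B \<noteq> {}" by (rule a1)
  qed
  have d: "\<forall>B\<in>fst ` P. \<forall>B'\<in>fst ` P. B \<noteq> B' \<longrightarrow> B \<inter> B' = {}"
  proof (intro ballI impI)
    fix B B' assume "B \<in> fst ` P" "B' \<in> fst ` P" "B \<noteq> B'"
    then obtain p p' where "(B,p) \<in> P" "(B',p') \<in> P" by force
    with a2 \<open>B \<noteq> B'\<close> show "B \<inter> B' = {}" by blast
  qed
  have "is_setpart (V1 \<union> V2) (fst ` P)" unfolding is_setpart_def
    using n d a3 by blast
  moreover have "inj_on fst P" unfolding inj_on_def
  proof (intro ballI impI)
    fix x y assume xy: "x \<in> P" "y \<in> P" "fst x = fst y"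
    obtain B p B' p' where e: "x = (B,p)" "y = (B',p')" by (cases x, cases y)
    with xy have "B = B'" by simp
    moreover have "B \<noteq> {}" using a1 xy e by blast
    ultimately have "B \<inter> B' \<noteq> {}" by simp
    with a2 xy e show "x = y" by blast
  qed
  moreover have "\<forall>(B, p) \<in> P. (\<forall>e. p = Some e \<longrightarrow> e \<in> B \<inter> V1) \<and>
                     (B \<subseteq> V1 \<longrightarrow> p \<noteq> None) \<and> (B \<subseteq> V2 \<longrightarrow> p = None)"
  proof
    fix x assume x: "x \<in> P"
    obtain B p where e: "x = (B,p)" by (cases x)
    show "case x of (B, p) \<Rightarrow> (\<forall>e. p = Some e \<longrightarrow> e \<in> B \<inter> V1) \<and>
                     (B \<subseteq> V1 \<longrightarrow> p \<noteq> None) \<and> (B \<subseteq> V2 \<longrightarrow> p = None)"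
      using a4[of B p] a5[of B p] a6[of B p] x e by auto
  qed
  ultimately show ?thesis unfolding SPP_def by blast
qed

lemma restr_SPP:
  assumes "Q \<in> SPP V1 V2" "covers b Q"
  shows "restr b Q \<in> SPP (b \<inter> V1) (b \<inter> V2)"
proof (rule SPP_I)
  note D = SPP_D[OF assms(1)]
  have bV: "b \<subseteq> V1 \<union> V2" using assms(2) D(7) unfolding covers_def restr_def by fastforce
  show "\<And>B p. (B,p) \<in> restr b Q \<Longrightarrow> B \<noteq> {}" using D(1) unfolding restr_def by auto
  show "\<And>B p B' p'. (B,p) \<in> restr b Q \<Longrightarrow> (B',p') \<in> restr b Q \<Longrightarrow> B \<inter> B' \<noteq> {} \<Longrightarrow> B = B' \<and> p = p'"
    using D(2) unfolding restr_def by blast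
  show "\<Union>(fst ` restr b Q) = b \<inter> V1 \<union> b \<inter> V2" using assms(2) bV unfolding covers_def by auto
  show "\<And>B p e. (B,p) \<in> restr b Q \<Longrightarrow> p = Some e \<Longrightarrow> e \<in> B \<and> e \<in> b \<inter> V1"
    using D(4) unfolding restr_def by auto
  show "\<And>B p. (B,p) \<in> restr b Q \<Longrightarrow> B \<subseteq> b \<inter> V1 \<Longrightarrow> p \<noteq> None"
    using D(5) unfolding restr_def by auto
  show "\<And>B p. (B,p) \<in> restr b Q \<Longrightarrow> B \<subseteq> b \<inter> V2 \<Longrightarrow> p = None"
    using D(6) unfolding restr_def by auto
qed

lemma restr_hd:
  assumes "P \<in> SPP V1 V2" "(b,p) \<in> P" shows "restr b P = {(b,p)}"
proof -
  note D = SPP_D[OF assms(1)]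
  show ?thesis
  proof
    show "{(b,p)} \<subseteq> restr b P" using assms(2) unfolding restr_def by auto
    show "restr b P \<subseteq> {(b,p)}"
    proof
      fix x assume "x \<in> restr b P"
      then obtain B q where x: "x = (B,q)" "(B,q) \<in> P" "B \<subseteq> b" unfolding restr_def by (cases x) auto
      have "B \<noteq> {}" using D(1) x by auto
      hence "B \<inter> b \<noteq> {}" using x by auto
      with D(2)[OF x(2) assms(2)] x show "x \<in> {(b,p)}" by auto
    qed
  qed
qed

lemma covers_hd: "P \<in> SPP V1 V2 \<Longrightarrow> (b,p) \<in> P \<Longrightarrow> covers b P"
  unfolding covers_def by (simp add: restr_hd)

lemma covers_chain:
  assumes mc: "multichain_in (SPP V1 V2) n cs" and bp: "(b,p) \<in> hd cs" and "i < n"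
  shows "covers b (cs ! i)"
proof -
  from mc have len: "length cs = n" and sub: "set cs \<subseteq> SPP V1 V2"
    and le: "\<And>i. Suc i < n \<Longrightarrow> sp_le (cs ! i) (cs ! Suc i)"
    unfolding multichain_in_def by auto
  have "covers b (cs ! j)" if "j < n" for j
    using that
  proof (induction j)
    case 0
    hence ne: "cs \<noteq> []" using len by auto
    hence "hd cs = cs ! 0" by (simp add: hd_conv_nth)
    moreover have "cs ! 0 \<in> SPP V1 V2" using sub ne nth_mem[of 0 cs] by auto
    ultimately show ?case using covers_hd bp by metis
  next
    case (Suc j)
    hence "covers b (cs ! j)" by auto
    moreover have "sp_le (cs ! j) (cs ! Suc j)" using le Suc by auto
    ultimately show ?case using covers_step by blast
  qed
  thus ?thesis using assms(3) .
qed


definition tagc :: "'a set \<Rightarrow> 'a spp list \<Rightarrow> 'a spp list + 'a spp list" where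
  "tagc b c = (if (b, None) \<in> hd c then Inr c else Inl c)"

definition untag :: "'s + 's \<Rightarrow> 's" where
  "untag t = (case t of Inl x \<Rightarrow> x | Inr x \<Rightarrow> x)"

definition decT :: "'a spp list \<Rightarrow> ('a set \<times> ('a spp list + 'a spp list)) set" where
  "decT cs = (\<lambda>b. (b, tagc b (map (restr b) cs))) ` (fst ` hd cs)"

definition GS :: "('a set \<times> ('a spp list + 'a spp list)) set \<Rightarrow> nat \<Rightarrow> 'a spp" where
  "GS S i = \<Union>((\<lambda>x. untag (snd x) ! i) ` S)"

definition glue :: "nat \<Rightarrow> ('a set \<times> ('a spp list + 'a spp list)) set \<Rightarrow> 'a spp list" where
  "glue n S = map (GS S) [0..<n]"

lemma untag_tagc[simp]: "untag (tagc b c) = c"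
  by (simp add: tagc_def untag_def)

lemma Un_Int_blk: "J \<subseteq> V1 \<union> V2 \<Longrightarrow> J \<inter> V1 \<union> J \<inter> V2 = J" by auto

lemma carrier_sum:
  "t \<in> fst (sp_sum (Cbul n) (Ctimes n)) V1 V2 \<longleftrightarrow>
   (\<exists>c. t = Inl c \<and> c \<in> fst (Cbul n) V1 V2) \<or> (\<exists>c. t = Inr c \<and> c \<in> fst (Ctimes n) V1 V2)"
  by (auto simp: sp_sum_def)

lemma block_struct:
  assumes J: "J \<subseteq> V1 \<union> V2" and t: "t \<in> fst (sp_sum (Cbul n) (Ctimes n)) (J \<inter> V1) (J \<inter> V2)"
  shows "multichain_in (SPP (J \<inter> V1) (J \<inter> V2)) n (untag t)"
    and "untag t \<noteq> []"
    and "\<exists>p. hd (untag t) = {(J,p)}"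
    and "tagc J (untag t) = t"
proof -
  have JJ: "J \<inter> V1 \<union> J \<inter> V2 = J" using J by auto
  from t consider (l) c where "t = Inl c" "c \<in> fst (Cbul n) (J \<inter> V1) (J \<inter> V2)"
    | (r) c where "t = Inr c" "c \<in> fst (Ctimes n) (J \<inter> V1) (J \<inter> V2)"
    unfolding carrier_sum by blast
  hence "multichain_in (SPP (J \<inter> V1) (J \<inter> V2)) n (untag t) \<and> untag t \<noteq> [] \<and>
         (\<exists>p. hd (untag t) = {(J,p)}) \<and> tagc J (untag t) = t"
  proof cases
    case l
    then obtain v where "hd c = mpt (J \<inter> V1) (J \<inter> V2) v"
      "multichain_in (SPP (J \<inter> V1) (J \<inter> V2)) n c" "c \<noteq> []"
      unfolding Cbul_def by auto
    moreover hence "hd c = {(J, Some v)}" unfolding mpt_def using JJ by simp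
    ultimately show ?thesis using l JJ by (auto simp: untag_def tagc_def mpt_def)
  next
    case r
    then have "hd c = mcross (J \<inter> V1) (J \<inter> V2)"
      "multichain_in (SPP (J \<inter> V1) (J \<inter> V2)) n c" "c \<noteq> []"
      unfolding Ctimes_def by auto
    moreover hence "hd c = {(J, None)}" unfolding mcross_def using JJ by simp
    ultimately show ?thesis using r JJ by (auto simp: untag_def tagc_def mcross_def)
  qed
  thus "multichain_in (SPP (J \<inter> V1) (J \<inter> V2)) n (untag t)"
    and "untag t \<noteq> []"
    and "\<exists>p. hd (untag t) = {(J,p)}"
    and "tagc J (untag t) = t" by auto
qed

lemma mc_nth: "multichain_in X n cs \<Longrightarrow> i < n \<Longrightarrow> cs ! i \<in> X"
  unfolding multichain_in_def by auto

lemma mc_le: "multichain_in X n cs \<Longrightarrow> Suc i < n \<Longrightarrow> sp_le (cs ! i) (cs ! Suc i)"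
  unfolding multichain_in_def by auto

lemma mc_len: "multichain_in X n cs \<Longrightarrow> length cs = n"
  unfolding multichain_in_def by auto

lemma mc_hd: "multichain_in X n cs \<Longrightarrow> 0 < n \<Longrightarrow> hd cs = cs ! 0"
  unfolding multichain_in_def by (auto simp: hd_conv_nth)

lemma mc_I:
  assumes "length cs = n" "\<And>i. i < n \<Longrightarrow> cs ! i \<in> X"
    "\<And>i. Suc i < n \<Longrightarrow> sp_le (cs ! i) (cs ! Suc i)"
  shows "multichain_in X n cs"
  unfolding multichain_in_def using assms by (auto simp: in_set_conv_nth)

lemma chain_block:
  assumes n: "0 < n" and mc: "multichain_in (SPP V1 V2) n cs" and bp: "(b,p) \<in> hd cs"
  shows "multichain_in (SPP (b \<inter> V1) (b \<inter> V2)) n (map (restr b) cs)"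
    and "hd (map (restr b) cs) = {(b,p)}"
    and "tagc b (map (restr b) cs) \<in> fst (sp_sum (Cbul n) (Ctimes n)) (b \<inter> V1) (b \<inter> V2)"
proof -
  have len: "length cs = n" using mc by (rule mc_len)
  have P0: "hd cs \<in> SPP V1 V2" using mc_hd[OF mc n] mc_nth[OF mc n] by simp
  show mc': "multichain_in (SPP (b \<inter> V1) (b \<inter> V2)) n (map (restr b) cs)"
  proof (rule mc_I)
    show "length (map (restr b) cs) = n" using len by simp
    fix i assume i: "i < n"
    show "map (restr b) cs ! i \<in> SPP (b \<inter> V1) (b \<inter> V2)"
      using restr_SPP[OF mc_nth[OF mc i] covers_chain[OF mc bp i]] i len by simp
  next
    fix i assume i: "Suc i < n"
    show "sp_le (map (restr b) cs ! i) (map (restr b) cs ! Suc i)"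
      using restr_le[OF mc_le[OF mc i]] i len by simp
  qed
  have ne: "cs \<noteq> []" using len n by auto
  show hd: "hd (map (restr b) cs) = {(b,p)}" using restr_hd[OF P0 bp] ne by (simp add: hd_map)
  have bV: "b \<subseteq> V1 \<union> V2" using SPP_D(7)[OF P0 bp] .
  hence JJ: "b \<inter> V1 \<union> b \<inter> V2 = b" by auto
  show "tagc b (map (restr b) cs) \<in> fst (sp_sum (Cbul n) (Ctimes n)) (b \<inter> V1) (b \<inter> V2)"
  proof (cases p)
    case None
    hence "tagc b (map (restr b) cs) = Inr (map (restr b) cs)" using hd by (simp add: tagc_def)
    moreover have "map (restr b) cs \<in> fst (Ctimes n) (b \<inter> V1) (b \<inter> V2)"
      unfolding Ctimes_def using mc' hd None JJ ne by (simp add: mcross_def)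
    ultimately show ?thesis unfolding carrier_sum by blast
  next
    case (Some v)
    hence "tagc b (map (restr b) cs) = Inl (map (restr b) cs)" using hd by (simp add: tagc_def)
    moreover have "v \<in> b \<inter> V1" using SPP_D(4)[OF P0 bp Some] by simp
    moreover have "map (restr b) cs \<in> fst (Cbul n) (b \<inter> V1) (b \<inter> V2)"
      unfolding Cbul_def using mc' hd Some JJ ne \<open>v \<in> b \<inter> V1\<close> by (auto simp: mpt_def)
    ultimately show ?thesis unfolding carrier_sum by blast
  qed
qed


lemma D1:
  assumes n: "0 < n" and mc: "multichain_in (SPP V1 V2) n cs"
  shows "decT cs \<in> comp_E_carrier (sp_sum (Cbul n) (Ctimes n)) V1 V2"
    and "glue n (decT cs) = cs"
proof -
  have len: "length cs = n" using mc by (rule mc_len)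
  have P0: "hd cs \<in> SPP V1 V2" using mc_hd[OF mc n] mc_nth[OF mc n] by simp
  have fd: "fst ` decT cs = fst ` hd cs" unfolding decT_def by (simp add: image_image)
  have "is_setpart (V1 \<union> V2) (fst ` decT cs)" using P0 fd unfolding SPP_def by auto
  moreover have "inj_on fst (decT cs)" unfolding decT_def inj_on_def by auto
  moreover have "\<forall>(J, s) \<in> decT cs. s \<in> fst (sp_sum (Cbul n) (Ctimes n)) (J \<inter> V1) (J \<inter> V2)"
  proof
    fix x assume "x \<in> decT cs"
    then obtain b p where bp: "(b,p) \<in> hd cs" "x = (b, tagc b (map (restr b) cs))"
      unfolding decT_def by force
    show "case x of (J, s) \<Rightarrow> s \<in> fst (sp_sum (Cbul n) (Ctimes n)) (J \<inter> V1) (J \<inter> V2)"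
      using chain_block(3)[OF n mc bp(1)] bp(2) by simp
  qed
  ultimately show "decT cs \<in> comp_E_carrier (sp_sum (Cbul n) (Ctimes n)) V1 V2"
    unfolding comp_E_carrier_def by blast
  show "glue n (decT cs) = cs"
  proof (rule nth_equalityI)
    show "length (glue n (decT cs)) = length cs" using len by (simp add: glue_def)
    fix i assume "i < length (glue n (decT cs))"
    hence i: "i < n" by (simp add: glue_def)
    have "GS (decT cs) i = (\<Union>b\<in>fst ` hd cs. restr b (cs ! i))"
      unfolding GS_def decT_def using i len by (simp add: image_image)
    also have "\<dots> = cs ! i"
    proof
      show "(\<Union>b\<in>fst ` hd cs. restr b (cs ! i)) \<subseteq> cs ! i" unfolding restr_def by auto
      show "cs ! i \<subseteq> (\<Union>b\<in>fst ` hd cs. restr b (cs ! i))"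
      proof
        fix y assume y: "y \<in> cs ! i"
        obtain B q where yB: "y = (B,q)" by (cases y)
        have Pi: "cs ! i \<in> SPP V1 V2" using mc_nth[OF mc i] .
        have "B \<noteq> {}" using SPP_D(1)[OF Pi] y yB by blast
        then obtain x where x: "x \<in> B" by auto
        have "x \<in> V1 \<union> V2" using SPP_D(7)[OF Pi] y yB x by blast
        hence "x \<in> \<Union>(fst ` hd cs)" using SPP_D(3)[OF P0] by simp
        then obtain b p where bp: "(b,p) \<in> hd cs" "x \<in> b" by force
        have "covers b (cs ! i)" using covers_chain[OF mc bp(1) i] .
        hence "x \<in> \<Union>(fst ` restr b (cs ! i))" using bp unfolding covers_def by simp
        then obtain z where z: "z \<in> restr b (cs ! i)" "x \<in> fst z" by auto
        obtain B' q' where zB: "z = (B',q')" by (cases z)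
        have "(B',q') \<in> cs ! i" "B' \<subseteq> b" using z zB unfolding restr_def by auto
        moreover have "B \<inter> B' \<noteq> {}" using x z zB by auto
        ultimately have "B = B' \<and> q = q'" using SPP_D(2)[OF Pi] y yB by blast
        hence "y \<in> restr b (cs ! i)" using z zB yB by simp
        thus "y \<in> (\<Union>b\<in>fst ` hd cs. restr b (cs ! i))" using bp by force
      qed
    qed
    finally show "glue n (decT cs) ! i = cs ! i" using i by (simp add: glue_def)
  qed
qed

lemma D2:
  assumes n: "0 < n" and S: "S \<in> comp_E_carrier (sp_sum (Cbul n) (Ctimes n)) V1 V2"
  shows "multichain_in (SPP V1 V2) n (glue n S)"
    and "decT (glue n S) = S"
    and "hd (glue n S) = (\<Union>x\<in>S. hd (untag (snd x)))"
proof -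
  from S have sp: "is_setpart (V1 \<union> V2) (fst ` S)" and inj: "inj_on fst S"
    and st: "\<And>x. x \<in> S \<Longrightarrow> snd x \<in> fst (sp_sum (Cbul n) (Ctimes n)) (fst x \<inter> V1) (fst x \<inter> V2)"
    unfolding comp_E_carrier_def by auto
  have xV: "fst x \<subseteq> V1 \<union> V2" if "x \<in> S" for x using sp that unfolding is_setpart_def by auto
  have disj: "fst x \<inter> fst y = {}" if "x \<in> S" "y \<in> S" "x \<noteq> y" for x y
  proof -
    have "fst x \<noteq> fst y" using inj that unfolding inj_on_def by auto
    thus ?thesis using sp that unfolding is_setpart_def by auto
  qed
  have xne: "fst x \<noteq> {}" if "x \<in> S" for x using sp that unfolding is_setpart_def by auto
  have mcx: "multichain_in (SPP (fst x \<inter> V1) (fst x \<inter> V2)) n (untag (snd x))" if "x \<in> S" for x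
    using block_struct(1)[OF xV st] that by blast
  have hdx: "\<exists>p. hd (untag (snd x)) = {(fst x,p)}" if "x \<in> S" for x
    using block_struct(3)[OF xV st] that by blast
  have tagx: "tagc (fst x) (untag (snd x)) = snd x" if "x \<in> S" for x
    using block_struct(4)[OF xV st] that by blast
  have cSPP: "untag (snd x) ! i \<in> SPP (fst x \<inter> V1) (fst x \<inter> V2)" if "x \<in> S" "i < n" for x i
    using mc_nth[OF mcx that(2)] that by blast
  have bsub: "B \<subseteq> fst x" if "x \<in> S" "i < n" "(B,q) \<in> untag (snd x) ! i" for x i B q
    using SPP_D(7)[OF cSPP that(3)] that by blast
  have cUn: "\<Union>(fst ` (untag (snd x) ! i)) = fst x" if "x \<in> S" "i < n" for x i
    using SPP_D(3)[OF cSPP[OF that]] xV[OF that(1)] by auto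
  have GSi: "GS S i \<in> SPP V1 V2" if i: "i < n" for i
  proof (rule SPP_I)
    show "\<And>B p. (B,p) \<in> GS S i \<Longrightarrow> B \<noteq> {}"
      using SPP_D(1)[OF cSPP[OF _ i]] unfolding GS_def by blast
    show "B = B' \<and> p = p'" if a: "(B,p) \<in> GS S i" "(B',p') \<in> GS S i" "B \<inter> B' \<noteq> {}" for B p B' p'
    proof -
      obtain x y where xy: "x \<in> S" "y \<in> S" "(B,p) \<in> untag (snd x) ! i" "(B',p') \<in> untag (snd y) ! i"
        using a unfolding GS_def by blast
      show ?thesis
      proof (cases "x = y")
        case True thus ?thesis using SPP_D(2)[OF cSPP[OF xy(1) i]] xy a(3) by blast
      next
        case False
        hence "fst x \<inter> fst y = {}" using disj xy by blast
        moreover have "B \<subseteq> fst x" "B' \<subseteq> fst y" using bsub[OF xy(1) i xy(3)] bsub[OF xy(2) i xy(4)] .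
        ultimately show ?thesis using a(3) by blast
      qed
    qed
    have "\<Union>(fst ` GS S i) = (\<Union>x\<in>S. \<Union>(fst ` (untag (snd x) ! i)))"
      unfolding GS_def by auto
    also have "\<dots> = (\<Union>x\<in>S. fst x)" using cUn[OF _ i] by simp
    also have "\<dots> = V1 \<union> V2" using sp unfolding is_setpart_def by auto
    finally show "\<Union>(fst ` GS S i) = V1 \<union> V2" .
    show "\<And>B p e. (B,p) \<in> GS S i \<Longrightarrow> p = Some e \<Longrightarrow> e \<in> B \<and> e \<in> V1"
      using SPP_D(4)[OF cSPP[OF _ i]] unfolding GS_def by blast
    show "p \<noteq> None" if a: "(B,p) \<in> GS S i" "B \<subseteq> V1" for B p
    proof -
      obtain x where x: "x \<in> S" "(B,p) \<in> untag (snd x) ! i" using a unfolding GS_def by blast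
      have "B \<subseteq> fst x \<inter> V1" using bsub[OF x(1) i x(2)] a by blast
      thus ?thesis using SPP_D(5)[OF cSPP[OF x(1) i] x(2)] by blast
    qed
    show "p = None" if a: "(B,p) \<in> GS S i" "B \<subseteq> V2" for B p
    proof -
      obtain x where x: "x \<in> S" "(B,p) \<in> untag (snd x) ! i" using a unfolding GS_def by blast
      have "B \<subseteq> fst x \<inter> V2" using bsub[OF x(1) i x(2)] a by blast
      thus ?thesis using SPP_D(6)[OF cSPP[OF x(1) i] x(2)] by blast
    qed
  qed
  have GSle: "sp_le (GS S i) (GS S (Suc i))" if i: "Suc i < n" for i
    unfolding sp_le_def
  proof (intro ballI, clarify)
    fix b p assume "(b,p) \<in> GS S i"
    then obtain x where x: "x \<in> S" "(b,p) \<in> untag (snd x) ! i" unfolding GS_def by blast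
    from mc_le[OF mcx[OF x(1)] i] x(2) obtain Qs where Qs: "Qs \<subseteq> untag (snd x) ! Suc i" "b = \<Union>(fst ` Qs)"
      "(case p of Some e \<Rightarrow> (\<exists>q. (q, Some e) \<in> Qs) | None \<Rightarrow> (\<exists>q. (q, None) \<in> Qs))"
      unfolding sp_le_def by fastforce
    have "Qs \<subseteq> GS S (Suc i)" using Qs(1) x(1) unfolding GS_def by blast
    thus "\<exists>Qs\<subseteq>GS S (Suc i). b = \<Union> (fst ` Qs) \<and>
            (case p of None \<Rightarrow> \<exists>q. (q, None) \<in> Qs | Some e \<Rightarrow> \<exists>q. (q, Some e) \<in> Qs)"
      using Qs(2,3) by blast
  qed
  show mcg: "multichain_in (SPP V1 V2) n (glue n S)"
    by (rule mc_I) (auto simp: glue_def GSi GSle)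
  have hdg: "hd (glue n S) = GS S 0" using n by (simp add: glue_def hd_map)
  have lenx: "length (untag (snd x)) = n" if "x \<in> S" for x using mc_len[OF mcx[OF that]] .
  have hdx0: "untag (snd x) ! 0 = hd (untag (snd x))" if "x \<in> S" for x
    using lenx[OF that] n by (metis hd_conv_nth less_numeral_extra(3) list.size(3))
  show hdS: "hd (glue n S) = (\<Union>x\<in>S. hd (untag (snd x)))"
    unfolding hdg GS_def using hdx0 by simp
  have fhd: "fst ` hd (glue n S) = fst ` S"
  proof -
    have "fst ` hd (glue n S) = (\<Union>x\<in>S. fst ` hd (untag (snd x)))" unfolding hdS by auto
    also have "\<dots> = (\<Union>x\<in>S. {fst x})"
    proof (rule SUP_cong)
      fix x assume "x \<in> S" then obtain p where "hd (untag (snd x)) = {(fst x,p)}" using hdx by blast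
      thus "fst ` hd (untag (snd x)) = {fst x}" by simp
    qed simp
    finally show ?thesis by auto
  qed
  have rG: "restr (fst x) (GS S i) = untag (snd x) ! i" if x: "x \<in> S" and i: "i < n" for x i
  proof
    show "untag (snd x) ! i \<subseteq> restr (fst x) (GS S i)"
      unfolding restr_def GS_def using bsub[OF x i] x by force
    show "restr (fst x) (GS S i) \<subseteq> untag (snd x) ! i"
    proof
      fix z assume z: "z \<in> restr (fst x) (GS S i)"
      obtain B q where zB: "z = (B,q)" by (cases z)
      from z zB obtain y where y: "y \<in> S" "(B,q) \<in> untag (snd y) ! i" "B \<subseteq> fst x"
        unfolding restr_def GS_def by auto
      have "B \<noteq> {}" using SPP_D(1)[OF cSPP[OF y(1) i] y(2)] .
      moreover have "B \<subseteq> fst y" using bsub[OF y(1) i y(2)] .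
      ultimately have "x = y" using disj[OF x y(1)] y(3) by blast
      thus "z \<in> untag (snd x) ! i" using y zB by simp
    qed
  qed
  have mr: "map (restr (fst x)) (glue n S) = untag (snd x)" if x: "x \<in> S" for x
    by (rule nth_equalityI) (auto simp: glue_def lenx[OF x] rG[OF x])
  show "decT (glue n S) = S"
  proof -
    have "decT (glue n S) = (\<lambda>b. (b, tagc b (map (restr b) (glue n S)))) ` fst ` S"
      unfolding decT_def fhd ..
    also have "\<dots> = (\<lambda>x. (fst x, tagc (fst x) (map (restr (fst x)) (glue n S)))) ` S"
      by (simp add: image_image)
    also have "\<dots> = (\<lambda>x. x) ` S"
      by (rule image_cong) (auto simp: mr tagx)
    finally show ?thesis by simp
  qed
qed


lemma img_subset_iff:
  assumes "inj_on f C" "A \<subseteq> C" "B \<subseteq> C" shows "f ` A \<subseteq> f ` B \<longleftrightarrow> A \<subseteq> B"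
proof
  assume h: "f ` A \<subseteq> f ` B"
  show "A \<subseteq> B"
  proof
    fix x assume x: "x \<in> A"
    then obtain y where "y \<in> B" "f x = f y" using h by blast
    with x assms show "x \<in> B" unfolding inj_on_def by blast
  qed
qed auto

lemma relP_restr:
  assumes inj: "inj_on \<sigma> V" and b: "b \<subseteq> V" and Q: "\<forall>x\<in>Q. fst x \<subseteq> V"
  shows "restr (\<sigma> ` b) (relP \<sigma> Q) = relP \<sigma> (restr b Q)"
proof -
  have eq: "\<sigma> ` B \<subseteq> \<sigma> ` b \<longleftrightarrow> B \<subseteq> b" if "(B,p) \<in> Q" for B p
  proof -
    have "B \<subseteq> V" using Q that by force
    from img_subset_iff[OF inj this b] show ?thesis .
  qed
  show ?thesis
  proof
    show "restr (\<sigma> ` b) (relP \<sigma> Q) \<subseteq> relP \<sigma> (restr b Q)"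
    proof
      fix y assume y: "y \<in> restr (\<sigma> ` b) (relP \<sigma> Q)"
      then obtain B p where B: "(B,p) \<in> Q" "y = (\<sigma> ` B, map_option \<sigma> p)"
        unfolding restr_def relP_def by auto
      with y have "\<sigma> ` B \<subseteq> \<sigma> ` b" unfolding restr_def by auto
      hence "B \<subseteq> b" using eq[OF B(1)] by simp
      hence "(B,p) \<in> restr b Q" using B unfolding restr_def by simp
      thus "y \<in> relP \<sigma> (restr b Q)" unfolding relP_def using B(2) by force
    qed
    show "relP \<sigma> (restr b Q) \<subseteq> restr (\<sigma> ` b) (relP \<sigma> Q)"
    proof
      fix y assume "y \<in> relP \<sigma> (restr b Q)"
      then obtain B p where B: "(B,p) \<in> Q" "B \<subseteq> b" "y = (\<sigma> ` B, map_option \<sigma> p)"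
        unfolding restr_def relP_def by auto
      have "y \<in> relP \<sigma> Q" unfolding relP_def using B by force
      thus "y \<in> restr (\<sigma> ` b) (relP \<sigma> Q)" unfolding restr_def using B by auto
    qed
  qed
qed

lemma fst_relP: "fst ` relP \<sigma> P = (\<lambda>B. \<sigma> ` B) ` fst ` P"
  unfolding relP_def by (simp add: image_image case_prod_beta')

lemma relP_single: "relP \<sigma> {(b,p)} = {(\<sigma> ` b, map_option \<sigma> p)}"
  unfolding relP_def by simp

lemma snd_SF: "snd (sp_sum (Cbul n) (Ctimes n)) \<sigma> = map_sum (map (relP \<sigma>)) (map (relP \<sigma>))"
  by (simp add: sp_sum_def Cbul_def Ctimes_def)

lemma decT_nat:
  assumes inj: "inj_on \<sigma> (V1 \<union> V2)" and n: "0 < n" and mc: "multichain_in (SPP V1 V2) n cs"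
  shows "decT (map (relP \<sigma>) cs) = comp_E_transport (sp_sum (Cbul n) (Ctimes n)) \<sigma> (decT cs)"
proof -
  have len: "length cs = n" using mc by (rule mc_len)
  have ne: "cs \<noteq> []" using len n by auto
  have P0: "hd cs \<in> SPP V1 V2" using mc_hd[OF mc n] mc_nth[OF mc n] by simp
  have L: "decT (map (relP \<sigma>) cs) =
     (\<lambda>b. (\<sigma> ` b, tagc (\<sigma> ` b) (map (restr (\<sigma> ` b)) (map (relP \<sigma>) cs)))) ` fst ` hd cs"
    unfolding decT_def using ne by (simp add: hd_map fst_relP image_image)
  have R: "comp_E_transport (sp_sum (Cbul n) (Ctimes n)) \<sigma> (decT cs) =
     (\<lambda>b. (\<sigma> ` b, map_sum (map (relP \<sigma>)) (map (relP \<sigma>)) (tagc b (map (restr b) cs)))) ` fst ` hd cs"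
    unfolding comp_E_transport_def decT_def snd_SF by (simp add: image_image)
  show ?thesis unfolding L R
  proof (rule image_cong[OF refl])
    fix b assume "b \<in> fst ` hd cs"
    then obtain p where bp: "(b,p) \<in> hd cs" by force
    have bV: "b \<subseteq> V1 \<union> V2" using SPP_D(7)[OF P0 bp] .
    have m: "map (restr (\<sigma> ` b)) (map (relP \<sigma>) cs) = map (relP \<sigma>) (map (restr b) cs)"
    proof (rule nth_equalityI)
      fix i assume "i < length (map (restr (\<sigma> ` b)) (map (relP \<sigma>) cs))"
      hence i: "i < n" using len by simp
      have "\<forall>x\<in>cs ! i. fst x \<subseteq> V1 \<union> V2" using SPP_D(7)[OF mc_nth[OF mc i]] by fastforce
      thus "map (restr (\<sigma> ` b)) (map (relP \<sigma>) cs) ! i = map (relP \<sigma>) (map (restr b) cs) ! i"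
        using relP_restr[OF inj bV] i len by simp
    qed simp
    have hd: "hd (map (restr b) cs) = {(b,p)}" using chain_block(2)[OF n mc bp] .
    have hd': "hd (map (relP \<sigma>) (map (restr b) cs)) = {(\<sigma> ` b, map_option \<sigma> p)}"
      using hd ne by (simp add: hd_map relP_single)
    show "(\<sigma> ` b, tagc (\<sigma> ` b) (map (restr (\<sigma> ` b)) (map (relP \<sigma>) cs))) =
          (\<sigma> ` b, map_sum (map (relP \<sigma>)) (map (relP \<sigma>)) (tagc b (map (restr b) cs)))"
      unfolding m using hd hd' by (cases p) (auto simp: tagc_def)
  qed
qed

lemma species_isoI:
  assumes "\<And>V1 V2. admissible V1 V2 \<Longrightarrow> bij_betw (\<phi> V1 V2) (fst F V1 V2) (fst G V1 V2)"
    and "\<And>V1 V2 W1 W2 \<sigma> s. admissible V1 V2 \<Longrightarrow> admissible W1 W2 \<Longrightarrow>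
            bij_betw \<sigma> V1 W1 \<Longrightarrow> bij_betw \<sigma> V2 W2 \<Longrightarrow> s \<in> fst F V1 V2 \<Longrightarrow>
            \<phi> W1 W2 (snd F \<sigma> s) = snd G \<sigma> (\<phi> V1 V2 s)"
  shows "species_iso F G"
  unfolding species_iso_def using assms by blast

lemma bij_inj_Un:
  assumes "admissible W1 W2" "bij_betw \<sigma> V1 W1" "bij_betw \<sigma> V2 W2"
  shows "inj_on \<sigma> (V1 \<union> V2)" and "\<sigma> ` V1 = W1" and "\<sigma> ` V2 = W2"
proof -
  show i1: "\<sigma> ` V1 = W1" "\<sigma> ` V2 = W2" using assms(2,3) by (auto simp: bij_betw_def)
  have "W1 \<inter> W2 = {}" using assms(1) unfolding admissible_def by auto
  thus "inj_on \<sigma> (V1 \<union> V2)" unfolding inj_on_Un using assms(2,3) i1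
    by (auto simp: bij_betw_def)
qed

lemma carrier_Ck: "fst (Ck k) V1 V2 = (if V1 = {} \<and> V2 = {} then {} else {cs. multichain_in (SPP V1 V2) k cs})"
  by (simp add: Ck_def)

theorem iso_Ck:
  assumes k: "1 \<le> k"
  shows "species_iso (Ck k :: ('a, 'a spp list) species) (sp_comp_E1 (sp_sum (Cbul k) (Ctimes k)))"
proof (rule species_isoI[where \<phi> = "\<lambda>V1 V2. decT"])
  have n: "0 < k" using k by simp
  fix V1 V2 :: "'a set" assume adm: "admissible V1 V2"
  show "bij_betw decT (fst (Ck k) V1 V2) (fst (sp_comp_E1 (sp_sum (Cbul k) (Ctimes k))) V1 V2)"
  proof (rule bij_betw_byWitness[where f' = "glue k"])
    show "\<forall>a\<in>fst (Ck k) V1 V2. glue k (decT a) = a"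
      using D1(2)[OF n] by (auto simp: carrier_Ck split: if_splits)
    show "\<forall>a'\<in>fst (sp_comp_E1 (sp_sum (Cbul k) (Ctimes k))) V1 V2. decT (glue k a') = a'"
      using D2(2)[OF n] by (auto simp: sp_comp_E1_def)
    show "decT ` fst (Ck k) V1 V2 \<subseteq> fst (sp_comp_E1 (sp_sum (Cbul k) (Ctimes k))) V1 V2"
    proof
      fix S assume "S \<in> decT ` fst (Ck k) V1 V2"
      then obtain cs where cs: "S = decT cs" "multichain_in (SPP V1 V2) k cs" "V1 \<union> V2 \<noteq> {}"
        by (auto simp: carrier_Ck split: if_splits)
      have P0: "hd cs \<in> SPP V1 V2" using mc_hd[OF cs(2) n] mc_nth[OF cs(2) n] by simp
      have "fst ` S = fst ` hd cs" unfolding cs decT_def by (simp add: image_image)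
      moreover have "hd cs \<noteq> {}" using SPP_D(3)[OF P0] cs(3) by auto
      ultimately have "S \<noteq> {}" by auto
      thus "S \<in> fst (sp_comp_E1 (sp_sum (Cbul k) (Ctimes k))) V1 V2"
        using D1(1)[OF n cs(2)] cs(1) by (simp add: sp_comp_E1_def)
    qed
    show "glue k ` fst (sp_comp_E1 (sp_sum (Cbul k) (Ctimes k))) V1 V2 \<subseteq> fst (Ck k) V1 V2"
    proof
      fix cs assume "cs \<in> glue k ` fst (sp_comp_E1 (sp_sum (Cbul k) (Ctimes k))) V1 V2"
      then obtain S where S: "cs = glue k S" "S \<in> comp_E_carrier (sp_sum (Cbul k) (Ctimes k)) V1 V2" "S \<noteq> {}"
        by (auto simp: sp_comp_E1_def)
      have "V1 \<union> V2 \<noteq> {}"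
      proof
        assume e: "V1 \<union> V2 = {}"
        have "is_setpart (V1 \<union> V2) (fst ` S)" using S(2) unfolding comp_E_carrier_def by auto
        hence "fst ` S = {}" using e unfolding is_setpart_def by auto
        thus False using S(3) by auto
      qed
      thus "cs \<in> fst (Ck k) V1 V2" using D2(1)[OF n S(2)] S(1) by (auto simp: carrier_Ck)
    qed
  qed
next
  have n: "0 < k" using k by simp
  fix V1 V2 W1 W2 :: "'a set" and \<sigma> s
  assume a: "admissible V1 V2" "admissible W1 W2" "bij_betw \<sigma> V1 W1" "bij_betw \<sigma> V2 W2"
    "s \<in> fst (Ck k) V1 V2"
  have inj: "inj_on \<sigma> (V1 \<union> V2)" using bij_inj_Un[OF a(2,3,4)] by simp
  have mc: "multichain_in (SPP V1 V2) k s" using a(5) by (auto simp: carrier_Ck split: if_splits)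
  show "decT (snd (Ck k) \<sigma> s) = snd (sp_comp_E1 (sp_sum (Cbul k) (Ctimes k))) \<sigma> (decT s)"
    using decT_nat[OF inj n mc] by (simp add: Ck_def sp_comp_E1_def)
qed


lemma mpt_SPP:
  assumes "V1 \<inter> V2 = {}" "v \<in> V1" shows "mpt V1 V2 v \<in> SPP V1 V2"
  by (rule SPP_I) (use assms in \<open>auto simp: mpt_def\<close>)

lemma mcross_SPP:
  assumes "V1 \<inter> V2 = {}" "V2 \<noteq> {}" shows "mcross V1 V2 \<in> SPP V1 V2"
  by (rule SPP_I) (use assms in \<open>auto simp: mcross_def\<close>)

lemma mcross_SPP_D: "mcross V1 V2 \<in> SPP V1 V2 \<Longrightarrow> V2 \<noteq> {}"
  using SPP_D(5)[of "mcross V1 V2" V1 V2 "V1 \<union> V2" None] by (auto simp: mcross_def)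

lemma le_mpt:
  assumes "P \<in> SPP V1 V2" shows "sp_le (mpt V1 V2 v) P \<longleftrightarrow> (\<exists>b. (b, Some v) \<in> P)"
proof
  assume "sp_le (mpt V1 V2 v) P"
  then obtain Qs where "Qs \<subseteq> P" "\<exists>q. (q, Some v) \<in> Qs" unfolding sp_le_def mpt_def by auto
  thus "\<exists>b. (b, Some v) \<in> P" by blast
next
  assume "\<exists>b. (b, Some v) \<in> P"
  moreover have "V1 \<union> V2 = \<Union>(fst ` P)" using SPP_D(3)[OF assms] by simp
  ultimately show "sp_le (mpt V1 V2 v) P" unfolding sp_le_def mpt_def by auto
qed

lemma le_mcross:
  assumes "P \<in> SPP V1 V2" shows "sp_le (mcross V1 V2) P \<longleftrightarrow> (\<exists>b. (b, None) \<in> P)"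
proof
  assume "sp_le (mcross V1 V2) P"
  then obtain Qs where "Qs \<subseteq> P" "\<exists>q. (q, None) \<in> Qs" unfolding sp_le_def mcross_def by auto
  thus "\<exists>b. (b, None) \<in> P" by blast
next
  assume "\<exists>b. (b, None) \<in> P"
  moreover have "V1 \<union> V2 = \<Union>(fst ` P)" using SPP_D(3)[OF assms] by simp
  ultimately show "sp_le (mcross V1 V2) P" unfolding sp_le_def mcross_def by auto
qed

lemma le_keeps:
  assumes "sp_le Q R" "(b, p) \<in> Q" shows "\<exists>b'. (b', p) \<in> R"
proof -
  from assms obtain Qs where "Qs \<subseteq> R"
    "(case p of Some e \<Rightarrow> (\<exists>q. (q, Some e) \<in> Qs) | None \<Rightarrow> (\<exists>q. (q, None) \<in> Qs))"
    unfolding sp_le_def by fastforce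
  thus ?thesis by (cases p) auto
qed

lemma le_hat1:
  assumes P: "P \<in> SPP V1 V2" shows "sp_le P (hat1 V1 V2)"
  unfolding sp_le_def
proof (intro ballI, clarify)
  fix b p assume bp: "(b,p) \<in> P"
  have bV: "b \<subseteq> V1 \<union> V2" using SPP_D(7)[OF P bp] .
  define Qs where "Qs = {q \<in> hat1 V1 V2. fst q \<subseteq> b}"
  have "Qs \<subseteq> hat1 V1 V2" unfolding Qs_def by auto
  moreover have "b = \<Union>(fst ` Qs)"
  proof
    show "\<Union>(fst ` Qs) \<subseteq> b" unfolding Qs_def by auto
    show "b \<subseteq> \<Union>(fst ` Qs)"
    proof
      fix x assume x: "x \<in> b"
      show "x \<in> \<Union>(fst ` Qs)"
      proof (cases "x \<in> V1")
        case True
        hence "({x}, Some x) \<in> Qs" using x unfolding Qs_def hat1_def by auto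
        thus ?thesis by force
      next
        case False
        hence "x \<in> V2" using x bV by auto
        hence "({x}, None) \<in> Qs" using x unfolding Qs_def hat1_def by auto
        thus ?thesis by force
      qed
    qed
  qed
  moreover have "(case p of Some e \<Rightarrow> (\<exists>q. (q, Some e) \<in> Qs) | None \<Rightarrow> (\<exists>q. (q, None) \<in> Qs))"
  proof (cases p)
    case None
    hence "\<not> b \<subseteq> V1" using SPP_D(5)[OF P bp] by auto
    then obtain x where "x \<in> b" "x \<notin> V1" by auto
    hence "({x}, None) \<in> Qs" using bV unfolding Qs_def hat1_def by auto
    thus ?thesis using None by auto
  next
    case (Some e)
    hence "e \<in> b" "e \<in> V1" using SPP_D(4)[OF P bp] by auto
    hence "({e}, Some e) \<in> Qs" unfolding Qs_def hat1_def by auto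
    thus ?thesis using Some by auto
  qed
  ultimately show "\<exists>Qs\<subseteq>hat1 V1 V2. b = \<Union> (fst ` Qs) \<and>
            (case p of None \<Rightarrow> \<exists>q. (q, None) \<in> Qs | Some e \<Rightarrow> \<exists>q. (q, Some e) \<in> Qs)"
    by (cases p) auto
qed

lemma minimals_cases:
  assumes "m \<in> minimals V1 V2"
  obtains v where "v \<in> V1" "m = mpt V1 V2 v" | "V2 \<noteq> {}" "m = mcross V1 V2"
  using assms unfolding minimals_def by (auto split: if_splits)

lemma minimal_up:
  assumes m: "m \<in> minimals V1 V2" and R: "R \<in> SPP V1 V2" and Q: "Q \<in> SPP V1 V2"
    and "sp_le m Q" "sp_le Q R" shows "sp_le m R"
  using m
proof (cases rule: minimals_cases)
  case (1 v)
  then obtain b where "(b, Some v) \<in> Q" using le_mpt[OF Q] assms(4) by auto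
  then obtain b' where "(b', Some v) \<in> R" using le_keeps[OF assms(5)] by blast
  thus ?thesis using le_mpt[OF R] 1 by auto
next
  case 2
  then obtain b where "(b, None) \<in> Q" using le_mcross[OF Q] assms(4) by auto
  then obtain b' where "(b', None) \<in> R" using le_keeps[OF assms(5)] by blast
  thus ?thesis using le_mcross[OF R] 2 by auto
qed

lemma minimals_SPP:
  assumes "V1 \<inter> V2 = {}" "m \<in> minimals V1 V2" shows "m \<in> SPP V1 V2"
  using assms(2)
proof (cases rule: minimals_cases)
  case (1 v) thus ?thesis using mpt_SPP[OF assms(1)] by simp
next
  case 2 thus ?thesis using mcross_SPP[OF assms(1)] by simp
qed

lemma interval_chain:
  assumes disj: "V1 \<inter> V2 = {}" and m: "m \<in> minimals V1 V2"
  shows "multichain_in (interval V1 V2 m (hat1 V1 V2)) n c \<longleftrightarrow>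
         multichain_in (SPP V1 V2) (Suc n) (m # c)"
proof
  assume h: "multichain_in (interval V1 V2 m (hat1 V1 V2)) n c"
  have mS: "m \<in> SPP V1 V2" using minimals_SPP[OF disj m] .
  show "multichain_in (SPP V1 V2) (Suc n) (m # c)"
  proof (rule mc_I)
    show "length (m # c) = Suc n" using mc_len[OF h] by simp
    fix i assume i: "i < Suc n"
    show "(m # c) ! i \<in> SPP V1 V2"
      using mS mc_nth[OF h, of "i - 1"] i by (cases i) (auto simp: interval_def)
  next
    fix i assume i: "Suc i < Suc n"
    show "sp_le ((m # c) ! i) ((m # c) ! Suc i)"
    proof (cases i)
      case 0 thus ?thesis using mc_nth[OF h, of 0] i by (auto simp: interval_def)
    next
      case (Suc j) thus ?thesis using mc_le[OF h, of j] i by auto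
    qed
  qed
next
  assume h: "multichain_in (SPP V1 V2) (Suc n) (m # c)"
  have len: "length c = n" using mc_len[OF h] by simp
  have cS: "c ! i \<in> SPP V1 V2" if "i < n" for i using mc_nth[OF h, of "Suc i"] that by simp
  have up: "sp_le m (c ! i)" if "i < n" for i
    using that
  proof (induction i)
    case 0 thus ?case using mc_le[OF h, of 0] by simp
  next
    case (Suc i)
    have "sp_le (c ! i) (c ! Suc i)" using mc_le[OF h, of "Suc i"] Suc by simp
    moreover have "i < n" "Suc i < n" using Suc.prems by auto
    moreover have "sp_le m (c ! i)" using Suc.IH \<open>i < n\<close> by simp
    ultimately show ?case using minimal_up[OF m cS[of "Suc i"] cS[of i]] by simp
  qed
  show "multichain_in (interval V1 V2 m (hat1 V1 V2)) n c"
  proof (rule mc_I)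
    show "length c = n" by (rule len)
    fix i assume i: "i < n"
    show "c ! i \<in> interval V1 V2 m (hat1 V1 V2)"
      unfolding interval_def using cS[OF i] up[OF i] le_hat1[OF cS[OF i]] by simp
  next
    fix i assume i: "Suc i < n"
    show "sp_le (c ! i) (c ! Suc i)" using mc_le[OF h, of "Suc i"] i by simp
  qed
qed

lemma relP_mcross:
  assumes "\<sigma> ` V1 = W1" "\<sigma> ` V2 = W2" shows "relP \<sigma> (mcross V1 V2) = mcross W1 W2"
  using assms by (simp add: mcross_def relP_def image_Un)

lemma relP_mpt:
  assumes "\<sigma> ` V1 = W1" "\<sigma> ` V2 = W2" shows "relP \<sigma> (mpt V1 V2 v) = mpt W1 W2 (\<sigma> v)"
  using assms by (simp add: mpt_def relP_def image_Un)

lemma mpt_ne_mcross[simp]: "mpt A B v \<noteq> mcross C D"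
  by (simp add: mpt_def mcross_def)

lemma mcross_ne_mpt[simp]: "mcross C D \<noteq> mpt A B v"
  by (simp add: mpt_def mcross_def)

lemma snd_Cell: "snd (Cell n) \<sigma> (m,c) = (relP \<sigma> m, map (relP \<sigma>) c)"
  by (simp add: Cell_def)

definition cellmap :: "'a set \<Rightarrow> 'a set \<Rightarrow> 'a spp \<times> 'a spp list \<Rightarrow> 'a spp list + 'a spp list" where
  "cellmap V1 V2 x = (if fst x = mcross V1 V2 then Inr (fst x # snd x) else Inl (fst x # snd x))"

theorem iso_Cell:
  assumes k: "2 \<le> k"
  shows "species_iso (Cell (k - 1) :: ('a, 'a spp \<times> 'a spp list) species) (sp_sum (Cbul k) (Ctimes k))"
proof (rule species_isoI[where \<phi> = cellmap])
  have kk: "Suc (k - 1) = k" using k by simp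
  fix V1 V2 :: "'a set" assume adm: "admissible V1 V2"
  hence disj: "V1 \<inter> V2 = {}" unfolding admissible_def by simp
  let ?g = "case_sum (\<lambda>cs. (hd cs, tl cs)) (\<lambda>cs. (hd cs, tl cs))"
  show "bij_betw (cellmap V1 V2) (fst (Cell (k - 1)) V1 V2) (fst (sp_sum (Cbul k) (Ctimes k)) V1 V2)"
  proof (rule bij_betw_byWitness[where f' = ?g])
    show "\<forall>a\<in>fst (Cell (k - 1)) V1 V2. ?g (cellmap V1 V2 a) = a"
    proof
      fix a :: "'a spp \<times> 'a spp list"
      obtain m c where "a = (m,c)" by (cases a)
      thus "?g (cellmap V1 V2 a) = a" by (simp add: cellmap_def)
    qed
    show "\<forall>a'\<in>fst (sp_sum (Cbul k) (Ctimes k)) V1 V2. cellmap V1 V2 (?g a') = a'"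
    proof
      fix t assume "t \<in> fst (sp_sum (Cbul k) (Ctimes k)) V1 V2"
      then consider (l) c where "t = Inl c" "c \<in> fst (Cbul k) V1 V2"
        | (r) c where "t = Inr c" "c \<in> fst (Ctimes k) V1 V2" unfolding carrier_sum by blast
      thus "cellmap V1 V2 (?g t) = t"
      proof cases
        case l
        then obtain v where "c \<noteq> []" "hd c = mpt V1 V2 v" by (auto simp: Cbul_def)
        then obtain x xs where "c = x # xs" "x = mpt V1 V2 v" by (cases c) auto
        thus ?thesis using l by (simp add: cellmap_def)
      next
        case r
        hence "c \<noteq> []" "hd c = mcross V1 V2" by (auto simp: Ctimes_def)
        then obtain x xs where "c = x # xs" "x = mcross V1 V2" by (cases c) auto
        thus ?thesis using r by (simp add: cellmap_def)
      qed
    qed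
    show "cellmap V1 V2 ` fst (Cell (k - 1)) V1 V2 \<subseteq> fst (sp_sum (Cbul k) (Ctimes k)) V1 V2"
    proof
      fix t assume "t \<in> cellmap V1 V2 ` fst (Cell (k - 1)) V1 V2"
      then obtain m c where mc: "t = cellmap V1 V2 (m,c)" "m \<in> minimals V1 V2"
        "multichain_in (interval V1 V2 m (hat1 V1 V2)) (k - 1) c" by (auto simp: Cell_def)
      have "multichain_in (SPP V1 V2) (Suc (k - 1)) (m # c)" using mc(3) interval_chain[OF disj mc(2)] by blast
      hence ch: "multichain_in (SPP V1 V2) k (m # c)" unfolding kk .
      from mc(2) show "t \<in> fst (sp_sum (Cbul k) (Ctimes k)) V1 V2"
      proof (cases rule: minimals_cases)
        case (1 v)
        hence "t = Inl (m # c)" using mc(1) by (simp add: cellmap_def)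
        moreover have "m # c \<in> fst (Cbul k) V1 V2" using ch 1 by (auto simp: Cbul_def)
        ultimately show ?thesis unfolding carrier_sum by blast
      next
        case 2
        hence "t = Inr (m # c)" using mc(1) by (simp add: cellmap_def)
        moreover have "m # c \<in> fst (Ctimes k) V1 V2" using ch 2 by (auto simp: Ctimes_def)
        ultimately show ?thesis unfolding carrier_sum by blast
      qed
    qed
    show "?g ` fst (sp_sum (Cbul k) (Ctimes k)) V1 V2 \<subseteq> fst (Cell (k - 1)) V1 V2"
    proof
      fix x assume "x \<in> ?g ` fst (sp_sum (Cbul k) (Ctimes k)) V1 V2"
      then obtain t where t: "x = ?g t" "t \<in> fst (sp_sum (Cbul k) (Ctimes k)) V1 V2" by blast
      then obtain cs where cs: "x = (hd cs, tl cs)" "multichain_in (SPP V1 V2) k cs" "cs \<noteq> []"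
        "hd cs \<in> minimals V1 V2"
      proof (cases rule: carrier_sum[THEN iffD1, OF t(2), THEN disjE])
        case 1
        then obtain c where c: "t = Inl c" "c \<in> fst (Cbul k) V1 V2" by blast
        then obtain v where hv: "v \<in> V1" "hd c = mpt V1 V2 v" and h: "multichain_in (SPP V1 V2) k c" "c \<noteq> []"
          by (auto simp: Cbul_def)
        have "hd c \<in> minimals V1 V2" using hv unfolding minimals_def by auto
        thus ?thesis using that[of c] c(1) t(1) h by simp
      next
        case 2
        then obtain c where c: "t = Inr c" "c \<in> fst (Ctimes k) V1 V2" by blast
        then have h: "hd c = mcross V1 V2" "multichain_in (SPP V1 V2) k c" "c \<noteq> []"
          by (auto simp: Ctimes_def)
        have "c ! 0 \<in> SPP V1 V2" using mc_nth[OF h(2)] k by simp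
        hence "V2 \<noteq> {}" using mcross_SPP_D h(1,3) by (metis hd_conv_nth)
        hence "hd c \<in> minimals V1 V2" unfolding minimals_def h(1) by auto
        thus ?thesis using that[of c] c(1) t(1) h(2,3) by simp
      qed
      have "cs = hd cs # tl cs" using cs(3) by simp
      hence "multichain_in (SPP V1 V2) k (hd cs # tl cs)" using cs(2) by simp
      hence "multichain_in (SPP V1 V2) (Suc (k - 1)) (hd cs # tl cs)" unfolding kk .
      hence "multichain_in (interval V1 V2 (hd cs) (hat1 V1 V2)) (k - 1) (tl cs)"
        using interval_chain[OF disj cs(4)] by blast
      thus "x \<in> fst (Cell (k - 1)) V1 V2" using cs by (auto simp: Cell_def)
    qed
  qed
next
  fix V1 V2 W1 W2 :: "'a set" and \<sigma> s
  assume a: "admissible V1 V2" "admissible W1 W2" "bij_betw \<sigma> V1 W1" "bij_betw \<sigma> V2 W2"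
    "s \<in> fst (Cell (k - 1)) V1 V2"
  note im = bij_inj_Un(2,3)[OF a(2,3,4)]
  obtain m c where s0: "s = (m,c)" by (cases s)
  have "m \<in> minimals V1 V2" using a(5) unfolding s0 Cell_def by simp
  note s = s0 this
  show "cellmap W1 W2 (snd (Cell (k - 1)) \<sigma> s) = snd (sp_sum (Cbul k) (Ctimes k)) \<sigma> (cellmap V1 V2 s)"
    using s(2)
  proof (cases rule: minimals_cases)
    case (1 v)
    have "snd (Cell (k - 1)) \<sigma> s = (mpt W1 W2 (\<sigma> v), map (relP \<sigma>) c)"
      using s(1) 1 relP_mpt[OF im] by (simp only: snd_Cell)
    thus ?thesis using s(1) 1 relP_mpt[OF im]
      by (simp add: cellmap_def snd_SF)
  next
    case 2
    have "snd (Cell (k - 1)) \<sigma> s = (mcross W1 W2, map (relP \<sigma>) c)"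
      using s(1) 2 relP_mcross[OF im] by (simp only: snd_Cell)
    thus ?thesis using s(1) 2 relP_mcross[OF im]
      by (simp add: cellmap_def snd_SF)
  qed
qed


lemma setpart_remove:
  assumes sp: "is_setpart V Bs" and b: "b \<in> Bs" shows "is_setpart (V - b) (Bs - {b})"
proof -
  have ne: "\<forall>B\<in>Bs. B \<noteq> {}" and d: "\<forall>B\<in>Bs. \<forall>B'\<in>Bs. B \<noteq> B' \<longrightarrow> B \<inter> B' = {}"
    and u: "\<Union>Bs = V" using sp unfolding is_setpart_def by auto
  have "\<Union>(Bs - {b}) = V - b"
  proof
    show "\<Union>(Bs - {b}) \<subseteq> V - b"
    proof
      fix x assume "x \<in> \<Union>(Bs - {b})"
      then obtain B where B: "B \<in> Bs" "B \<noteq> b" "x \<in> B" by auto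
      have "B \<inter> b = {}" using d B b by blast
      thus "x \<in> V - b" using B u by auto
    qed
    show "V - b \<subseteq> \<Union>(Bs - {b})" using u by auto
  qed
  thus ?thesis using ne d unfolding is_setpart_def by simp
qed

lemma setpart_union:
  assumes s1: "is_setpart A Bs" and s2: "is_setpart C Cs" and AC: "A \<inter> C = {}"
  shows "is_setpart (A \<union> C) (Bs \<union> Cs)"
proof -
  have ne: "\<forall>B\<in>Bs \<union> Cs. B \<noteq> {}" using s1 s2 unfolding is_setpart_def by auto
  have d1: "\<forall>B\<in>Bs. \<forall>B'\<in>Bs. B \<noteq> B' \<longrightarrow> B \<inter> B' = {}" "\<Union>Bs = A" using s1 unfolding is_setpart_def by auto
  have d2: "\<forall>B\<in>Cs. \<forall>B'\<in>Cs. B \<noteq> B' \<longrightarrow> B \<inter> B' = {}" "\<Union>Cs = C" using s2 unfolding is_setpart_def by auto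
  have "B \<inter> B' = {}" if t: "B \<in> Bs \<union> Cs" "B' \<in> Bs \<union> Cs" "B \<noteq> B'" for B B'
  proof -
    consider "B \<in> Bs" "B' \<in> Bs" | "B \<in> Cs" "B' \<in> Cs" | "B \<in> Bs" "B' \<in> Cs" | "B \<in> Cs" "B' \<in> Bs"
      using t by blast
    thus ?thesis
    proof cases
      case 1 thus ?thesis using d1(1) t(3) by blast
    next
      case 2 thus ?thesis using d2(1) t(3) by blast
    next
      case 3
      hence "B \<subseteq> A" "B' \<subseteq> C" using d1(2) d2(2) by auto
      thus ?thesis using AC by blast
    next
      case 4
      hence "B \<subseteq> C" "B' \<subseteq> A" using d1(2) d2(2) by auto
      thus ?thesis using AC by blast
    qed
  qed
  moreover have "\<Union>(Bs \<union> Cs) = A \<union> C" using d1(2) d2(2) by auto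
  ultimately show ?thesis using ne unfolding is_setpart_def by blast
qed

lemma relP_SPP:
  assumes inj: "inj_on \<sigma> (V1 \<union> V2)" and i1: "\<sigma> ` V1 = W1" and i2: "\<sigma> ` V2 = W2"
    and dW: "W1 \<inter> W2 = {}" and P: "P \<in> SPP V1 V2"
  shows "relP \<sigma> P \<in> SPP W1 W2"
proof -
  note D = SPP_D[OF P]
  have mem: "y \<in> relP \<sigma> P \<longleftrightarrow> (\<exists>B p. (B,p) \<in> P \<and> y = (\<sigma> ` B, map_option \<sigma> p))" for y
    unfolding relP_def by auto
  show ?thesis
  proof (rule SPP_I)
    show "B \<noteq> {}" if a: "(B,p) \<in> relP \<sigma> P" for B p
    proof -
      obtain C q where c: "(C,q) \<in> P" "B = \<sigma> ` C" using a unfolding mem by auto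
      thus ?thesis using D(1)[OF c(1)] by simp
    qed
    show "B = B' \<and> p = p'" if a: "(B,p) \<in> relP \<sigma> P" "(B',p') \<in> relP \<sigma> P" "B \<inter> B' \<noteq> {}" for B p B' p'
    proof -
      obtain C q C' q' where c: "(C,q) \<in> P" "B = \<sigma> ` C" "p = map_option \<sigma> q"
        "(C',q') \<in> P" "B' = \<sigma> ` C'" "p' = map_option \<sigma> q'" using a(1,2) unfolding mem by auto
      obtain x y where "x \<in> C" "y \<in> C'" "\<sigma> x = \<sigma> y" using a(3) c by auto
      moreover have "C \<subseteq> V1 \<union> V2" "C' \<subseteq> V1 \<union> V2" using D(7) c by auto
      ultimately have "x = y" using inj unfolding inj_on_def by blast
      hence "C \<inter> C' \<noteq> {}" using \<open>x \<in> C\<close> \<open>y \<in> C'\<close> by auto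
      thus ?thesis using D(2)[OF c(1) c(4)] c by simp
    qed
    have "\<Union>(fst ` relP \<sigma> P) = \<sigma> ` \<Union>(fst ` P)" unfolding fst_relP by auto
    thus "\<Union>(fst ` relP \<sigma> P) = W1 \<union> W2" using D(3) i1 i2 by (simp add: image_Un)
    show "e \<in> B \<and> e \<in> W1" if a: "(B,p) \<in> relP \<sigma> P" "p = Some e" for B p e
    proof -
      obtain C q where c: "(C,q) \<in> P" "B = \<sigma> ` C" "p = map_option \<sigma> q" using a(1) unfolding mem by auto
      then obtain e' where "q = Some e'" "e = \<sigma> e'" using a(2) by (cases q) auto
      moreover have "e' \<in> C \<and> e' \<in> V1" using D(4)[OF c(1)] \<open>q = Some e'\<close> by simp
      ultimately show ?thesis using c(2) i1 by auto
    qed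
    show "p \<noteq> None" if a: "(B,p) \<in> relP \<sigma> P" "B \<subseteq> W1" for B p
    proof -
      obtain C q where c: "(C,q) \<in> P" "B = \<sigma> ` C" "p = map_option \<sigma> q" using a(1) unfolding mem by auto
      have "C \<subseteq> V1"
      proof
        fix x assume x: "x \<in> C"
        hence "x \<in> V1 \<union> V2" using D(7)[OF c(1)] by auto
        moreover have "\<sigma> x \<in> W1" using a(2) c(2) x by auto
        ultimately show "x \<in> V1" using dW i2 by auto
      qed
      thus ?thesis using D(5)[OF c(1)] c(3) by simp
    qed
    show "p = None" if a: "(B,p) \<in> relP \<sigma> P" "B \<subseteq> W2" for B p
    proof -
      obtain C q where c: "(C,q) \<in> P" "B = \<sigma> ` C" "p = map_option \<sigma> q" using a(1) unfolding mem by auto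
      have "C \<subseteq> V2"
      proof
        fix x assume x: "x \<in> C"
        hence "x \<in> V1 \<union> V2" using D(7)[OF c(1)] by auto
        moreover have "\<sigma> x \<in> W2" using a(2) c(2) x by auto
        ultimately show "x \<in> V2" using dW i1 by auto
      qed
      thus ?thesis using D(6)[OF c(1)] c(3) by simp
    qed
  qed
qed

lemma maprestr_nat:
  assumes inj: "inj_on \<sigma> (V1 \<union> V2)" and mc: "multichain_in (SPP V1 V2) n cs" and bV: "b \<subseteq> V1 \<union> V2"
  shows "map (restr (\<sigma> ` b)) (map (relP \<sigma>) cs) = map (relP \<sigma>) (map (restr b) cs)"
proof (rule nth_equalityI)
  have len: "length cs = n" using mc by (rule mc_len)
  fix i assume "i < length (map (restr (\<sigma> ` b)) (map (relP \<sigma>) cs))"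
  hence i: "i < n" using len by simp
  have "\<forall>x\<in>cs ! i. fst x \<subseteq> V1 \<union> V2" using SPP_D(7)[OF mc_nth[OF mc i]] by fastforce
  thus "map (restr (\<sigma> ` b)) (map (relP \<sigma>) cs) ! i = map (relP \<sigma>) (map (restr b) cs) ! i"
    using relP_restr[OF inj bV] i len by simp
qed simp

lemma transport_filter:
  assumes "\<And>x. x \<in> D \<Longrightarrow> Q (\<sigma> ` fst x) \<longleftrightarrow> P (fst x)"
  shows "{y \<in> comp_E_transport F \<sigma> D. Q (fst y)} = comp_E_transport F \<sigma> {x \<in> D. P (fst x)}"
  using assms unfolding comp_E_transport_def by force

lemma mc_tl:
  assumes "multichain_in X (Suc n) cs" shows "multichain_in X n (tl cs)"
proof (rule mc_I)
  have "length cs = Suc n" using mc_len[OF assms] .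
  thus l: "length (tl cs) = n" by simp
  fix i assume "i < n"
  thus "tl cs ! i \<in> X" using mc_nth[OF assms, of "Suc i"] \<open>length cs = Suc n\<close> by (simp add: nth_tl)
next
  have "length cs = Suc n" using mc_len[OF assms] .
  fix i assume "Suc i < n"
  thus "sp_le (tl cs ! i) (tl cs ! Suc i)" using mc_le[OF assms, of "Suc i"] \<open>length cs = Suc n\<close>
    by (simp add: nth_tl)
qed

lemma mc_Cons:
  assumes "multichain_in X n c" "m \<in> X" "0 < n \<Longrightarrow> sp_le m (hd c)"
  shows "multichain_in X (Suc n) (m # c)"
proof (rule mc_I)
  show "length (m # c) = Suc n" using mc_len[OF assms(1)] by simp
  fix i assume "i < Suc n"
  thus "(m # c) ! i \<in> X" using assms(2) mc_nth[OF assms(1), of "i - 1"] by (cases i) auto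
next
  fix i assume i: "Suc i < Suc n"
  show "sp_le ((m # c) ! i) ((m # c) ! Suc i)"
  proof (cases i)
    case 0 thus ?thesis using assms(3) i mc_hd[OF assms(1)] by simp
  next
    case (Suc j) thus ?thesis using mc_le[OF assms(1), of j] i by simp
  qed
qed

lemma mc_hd_mem: "multichain_in X n c \<Longrightarrow> 0 < n \<Longrightarrow> hd c \<in> X"
  using mc_hd mc_nth by metis

lemma decT_fst: "fst ` decT cs = fst ` hd cs"
  unfolding decT_def by (simp add: image_image)

lemma decT_mem: "(b,t) \<in> decT cs \<longleftrightarrow> b \<in> fst ` hd cs \<and> t = tagc b (map (restr b) cs)"
  unfolding decT_def by auto

section \<open>The pointed decomposition\<close>

definition pt :: "'a spp \<Rightarrow> 'a" where "pt P = the (snd (the_elem P))"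

definition blk :: "'a \<Rightarrow> 'a spp \<Rightarrow> 'a set" where "blk v P = (THE b. (b, Some v) \<in> P)"

lemma pt_single[simp]: "pt {(b, Some v)} = v" by (simp add: pt_def)

lemma pt_mpt[simp]: "pt (mpt V1 V2 v) = v" by (simp add: mpt_def)

lemma blk_eq:
  assumes "P \<in> SPP V1 V2" "(b, Some v) \<in> P" shows "blk v P = b"
  unfolding blk_def
proof (rule the_equality)
  show "(b, Some v) \<in> P" by fact
  fix b' assume b': "(b', Some v) \<in> P"
  have "v \<in> b" "v \<in> b'" using SPP_D(4)[OF assms(1)] assms(2) b' by auto
  thus "b' = b" using SPP_D(2)[OF assms(1) b' assms(2)] by auto
qed

definition bulmap :: "'a set \<Rightarrow> 'a set \<Rightarrow> 'a spp list \<Rightarrow>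
    ('a set \<times> 'a set) \<times> 'a spp list \<times> ('a set \<times> ('a spp list + 'a spp list)) set" where
  "bulmap V1 V2 cs = (let b0 = blk (pt (hd cs)) (hd (tl cs)) in
     ((b0 \<inter> V1, b0 \<inter> V2), map (restr b0) (tl cs), {x \<in> decT (tl cs). fst x \<noteq> b0}))"

definition bulinv :: "nat \<Rightarrow> 'a set \<Rightarrow> 'a set \<Rightarrow>
    ('a set \<times> 'a set) \<times> 'a spp list \<times> ('a set \<times> ('a spp list + 'a spp list)) set \<Rightarrow> 'a spp list" where
  "bulinv n V1 V2 x = (case x of ((I1, J1), c1, S') \<Rightarrow>
      mpt V1 V2 (pt (hd c1)) # glue n (insert (I1 \<union> J1, Inl c1) S'))"

lemma carrier_prod:
  "y \<in> fst (sp_prod F G) V1 V2 \<longleftrightarrow> (\<exists>I1 J1 f g. y = ((I1, J1), f, g) \<and>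
     I1 \<subseteq> V1 \<and> J1 \<subseteq> V2 \<and> f \<in> fst F I1 J1 \<and> g \<in> fst G (V1 - I1) (V2 - J1))"
  by (simp add: sp_prod_def)

lemma Cbul_mem:
  "cs \<in> fst (Cbul n) V1 V2 \<longleftrightarrow> multichain_in (SPP V1 V2) n cs \<and> cs \<noteq> [] \<and> (\<exists>v\<in>V1. hd cs = mpt V1 V2 v)"
  by (simp add: Cbul_def)

lemma Ctimes_mem:
  "cs \<in> fst (Ctimes n) V1 V2 \<longleftrightarrow> multichain_in (SPP V1 V2) n cs \<and> cs \<noteq> [] \<and> hd cs = mcross V1 V2"
  by (simp add: Ctimes_def)

lemma bul_fwd:
  assumes adm: "admissible V1 V2" and n: "0 < n" and cs: "cs \<in> fst (Cbul (Suc n)) V1 V2"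
  shows "bulmap V1 V2 cs \<in> fst (sp_prod (Cbul n) (sp_comp_E (sp_sum (Cbul n) (Ctimes n)))) V1 V2"
    and "bulinv n V1 V2 (bulmap V1 V2 cs) = cs"
proof -
  have disj: "V1 \<inter> V2 = {}" using adm unfolding admissible_def by simp
  obtain v where v: "v \<in> V1" "hd cs = mpt V1 V2 v" and mc: "multichain_in (SPP V1 V2) (Suc n) cs"
    and ne: "cs \<noteq> []" using cs unfolding Cbul_mem by blast
  define rest where "rest = tl cs"
  have cs_eq: "cs = mpt V1 V2 v # rest" using ne v unfolding rest_def by (cases cs) auto
  have mcr: "multichain_in (SPP V1 V2) n rest" unfolding rest_def using mc_tl[OF mc] .
  have P0: "hd rest \<in> SPP V1 V2" using mc_hd_mem[OF mcr n] .
  have "sp_le (mpt V1 V2 v) (hd rest)"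
    using mc_le[OF mc, of 0] n mc_hd[OF mcr n] unfolding cs_eq by simp
  then obtain b0 where b0: "(b0, Some v) \<in> hd rest" using le_mpt[OF P0] by auto
  have blk0: "blk v (hd rest) = b0" using blk_eq[OF P0 b0] .
  have b0V: "b0 \<subseteq> V1 \<union> V2" using SPP_D(7)[OF P0 b0] .
  define c1 where "c1 = map (restr b0) rest"
  define S' where "S' = {x \<in> decT rest. fst x \<noteq> b0}"
  have bm: "bulmap V1 V2 cs = ((b0 \<inter> V1, b0 \<inter> V2), c1, S')"
    unfolding bulmap_def cs_eq using blk0 by (simp add: c1_def S'_def Let_def)
  have hdc1: "hd c1 = {(b0, Some v)}" unfolding c1_def using chain_block(2)[OF n mcr b0] .
  have tag: "tagc b0 c1 = Inl c1" using hdc1 by (simp add: tagc_def)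
  have c1m: "c1 \<in> fst (Cbul n) (b0 \<inter> V1) (b0 \<inter> V2)"
    using chain_block(3)[OF n mcr b0] unfolding c1_def[symmetric] tag carrier_sum by blast
  have D: "decT rest \<in> comp_E_carrier (sp_sum (Cbul n) (Ctimes n)) V1 V2" using D1(1)[OF n mcr] .
  from D have spD: "is_setpart (V1 \<union> V2) (fst ` decT rest)" and injD: "inj_on fst (decT rest)"
    and stD: "\<And>J s. (J,s) \<in> decT rest \<Longrightarrow> s \<in> fst (sp_sum (Cbul n) (Ctimes n)) (J \<inter> V1) (J \<inter> V2)"
    unfolding comp_E_carrier_def by auto
  have b0D: "(b0, Inl c1) \<in> decT rest" unfolding decT_mem using b0 tag c1_def by force
  have b0f: "b0 \<in> fst ` decT rest" using b0D by force
  have fS': "fst ` S' = fst ` decT rest - {b0}" unfolding S'_def by auto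
  have VV: "(V1 - b0 \<inter> V1) \<union> (V2 - b0 \<inter> V2) = V1 \<union> V2 - b0" by auto
  have S'm: "S' \<in> comp_E_carrier (sp_sum (Cbul n) (Ctimes n)) (V1 - b0 \<inter> V1) (V2 - b0 \<inter> V2)"
    unfolding comp_E_carrier_def
  proof (intro CollectI conjI)
    show "is_setpart (V1 - b0 \<inter> V1 \<union> (V2 - b0 \<inter> V2)) (fst ` S')"
      unfolding VV fS' using setpart_remove[OF spD b0f] .
    show "inj_on fst S'" using injD unfolding S'_def by (rule inj_on_subset) auto
    show "\<forall>(J, s)\<in>S'. s \<in> fst (sp_sum (Cbul n) (Ctimes n)) (J \<inter> (V1 - b0 \<inter> V1)) (J \<inter> (V2 - b0 \<inter> V2))"
    proof (clarify)
      fix J s assume Js: "(J,s) \<in> S'"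
      hence "(J,s) \<in> decT rest" "J \<noteq> b0" unfolding S'_def by auto
      hence "J \<inter> b0 = {}" using spD b0f unfolding is_setpart_def by force
      hence "J \<inter> (V1 - b0 \<inter> V1) = J \<inter> V1" "J \<inter> (V2 - b0 \<inter> V2) = J \<inter> V2" by auto
      thus "s \<in> fst (sp_sum (Cbul n) (Ctimes n)) (J \<inter> (V1 - b0 \<inter> V1)) (J \<inter> (V2 - b0 \<inter> V2))"
        using stD[OF \<open>(J,s) \<in> decT rest\<close>] by simp
    qed
  qed
  show "bulmap V1 V2 cs \<in> fst (sp_prod (Cbul n) (sp_comp_E (sp_sum (Cbul n) (Ctimes n)))) V1 V2"
    unfolding bm carrier_prod using c1m S'm by (auto simp: sp_comp_E_def)
  have ins: "insert (b0, Inl c1) S' = decT rest"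
  proof
    show "insert (b0, Inl c1) S' \<subseteq> decT rest" using b0D unfolding S'_def by auto
    show "decT rest \<subseteq> insert (b0, Inl c1) S'"
    proof
      fix x assume x: "x \<in> decT rest"
      show "x \<in> insert (b0, Inl c1) S'"
      proof (cases "fst x = b0")
        case True
        hence "x = (b0, Inl c1)" using injD x b0D unfolding inj_on_def by force
        thus ?thesis by simp
      next
        case False thus ?thesis using x unfolding S'_def by simp
      qed
    qed
  qed
  have "b0 \<inter> V1 \<union> b0 \<inter> V2 = b0" using b0V by auto
  thus "bulinv n V1 V2 (bulmap V1 V2 cs) = cs"
    unfolding bm bulinv_def using hdc1 ins D1(2)[OF n mcr] cs_eq by simp
qed

lemma bul_bwd:
  assumes adm: "admissible V1 V2" and n: "0 < n"
    and x: "x \<in> fst (sp_prod (Cbul n) (sp_comp_E (sp_sum (Cbul n) (Ctimes n)))) V1 V2"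
  shows "bulinv n V1 V2 x \<in> fst (Cbul (Suc n)) V1 V2"
    and "bulmap V1 V2 (bulinv n V1 V2 x) = x"
proof -
  have disj: "V1 \<inter> V2 = {}" using adm unfolding admissible_def by simp
  obtain I1 J1 c1 S' where xe: "x = ((I1,J1), c1, S')" and IJ: "I1 \<subseteq> V1" "J1 \<subseteq> V2"
    and c1: "c1 \<in> fst (Cbul n) I1 J1"
    and S': "S' \<in> comp_E_carrier (sp_sum (Cbul n) (Ctimes n)) (V1 - I1) (V2 - J1)"
    using x unfolding carrier_prod by (auto simp: sp_comp_E_def)
  obtain w where w: "w \<in> I1" "hd c1 = mpt I1 J1 w" and mc1: "multichain_in (SPP I1 J1) n c1"
    and ne1: "c1 \<noteq> []" using c1 unfolding Cbul_mem by blast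
  define b0 where "b0 = I1 \<union> J1"
  have hdc1: "hd c1 = {(b0, Some w)}" using w unfolding b0_def mpt_def by simp
  have b01: "b0 \<inter> V1 = I1" "b0 \<inter> V2 = J1" using IJ disj unfolding b0_def by auto
  from S' have spS: "is_setpart ((V1 - I1) \<union> (V2 - J1)) (fst ` S')" and injS: "inj_on fst S'"
    and stS: "\<And>J s. (J,s) \<in> S' \<Longrightarrow> s \<in> fst (sp_sum (Cbul n) (Ctimes n)) (J \<inter> (V1 - I1)) (J \<inter> (V2 - J1))"
    unfolding comp_E_carrier_def by auto
  have VV: "(V1 - I1) \<union> (V2 - J1) = V1 \<union> V2 - b0" using IJ disj unfolding b0_def by auto
  have b0ne: "b0 \<noteq> {}" using w unfolding b0_def by auto
  have Jsub: "J \<subseteq> V1 \<union> V2 - b0" if "J \<in> fst ` S'" for J using spS that VV unfolding is_setpart_def by auto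
  have b0nS: "b0 \<notin> fst ` S'" using Jsub b0ne by blast
  define S where "S = insert (b0, Inl c1) S'"
  have Sm: "S \<in> comp_E_carrier (sp_sum (Cbul n) (Ctimes n)) V1 V2"
    unfolding comp_E_carrier_def
  proof (intro CollectI conjI)
    have "is_setpart (b0 \<union> (V1 \<union> V2 - b0)) ({b0} \<union> fst ` S')"
      by (rule setpart_union) (use spS VV b0ne in \<open>auto simp: is_setpart_def\<close>)
    moreover have "b0 \<union> (V1 \<union> V2 - b0) = V1 \<union> V2" using IJ unfolding b0_def by auto
    ultimately show "is_setpart (V1 \<union> V2) (fst ` S)" unfolding S_def by simp
    show "inj_on fst S" unfolding S_def using injS b0nS by auto
    show "\<forall>(J, s)\<in>S. s \<in> fst (sp_sum (Cbul n) (Ctimes n)) (J \<inter> V1) (J \<inter> V2)"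
    proof (clarify)
      fix J s assume "(J,s) \<in> S"
      hence "(J,s) = (b0, Inl c1) \<or> (J,s) \<in> S'" unfolding S_def by simp
      thus "s \<in> fst (sp_sum (Cbul n) (Ctimes n)) (J \<inter> V1) (J \<inter> V2)"
      proof
        assume "(J,s) = (b0, Inl c1)"
        thus ?thesis using c1 b01 unfolding carrier_sum by auto
      next
        assume Js: "(J,s) \<in> S'"
        have "J \<subseteq> V1 \<union> V2 - b0" using Jsub Js by force
        hence "J \<inter> (V1 - I1) = J \<inter> V1" "J \<inter> (V2 - J1) = J \<inter> V2" unfolding b0_def by auto
        thus ?thesis using stS[OF Js] by simp
      qed
    qed
  qed
  define rest where "rest = glue n S"
  have mcr: "multichain_in (SPP V1 V2) n rest" unfolding rest_def using D2(1)[OF n Sm] .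
  have dec: "decT rest = S" unfolding rest_def using D2(2)[OF n Sm] .
  have "hd rest = (\<Union>x\<in>S. hd (untag (snd x)))" unfolding rest_def using D2(3)[OF n Sm] .
  hence b0r: "(b0, Some w) \<in> hd rest" using hdc1 unfolding S_def by (auto simp: untag_def)
  have P0: "hd rest \<in> SPP V1 V2" using mc_hd_mem[OF mcr n] .
  have wV: "w \<in> V1" using w IJ by auto
  have bi: "bulinv n V1 V2 x = mpt V1 V2 w # rest"
    unfolding xe bulinv_def rest_def S_def b0_def using w by simp
  have "multichain_in (SPP V1 V2) (Suc n) (mpt V1 V2 w # rest)"
    by (rule mc_Cons[OF mcr mpt_SPP[OF disj wV]]) (use le_mpt[OF P0] b0r in blast)
  thus "bulinv n V1 V2 x \<in> fst (Cbul (Suc n)) V1 V2" unfolding bi Cbul_mem using wV by auto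
  have blk0: "blk w (hd rest) = b0" using blk_eq[OF P0 b0r] .
  have "(b0, tagc b0 (map (restr b0) rest)) \<in> S" unfolding dec[symmetric] decT_mem using b0r by force
  moreover have "(b0, Inl c1) \<in> S" unfolding S_def by simp
  ultimately have "tagc b0 (map (restr b0) rest) = Inl c1"
    using Sm unfolding comp_E_carrier_def inj_on_def by force
  hence mr: "map (restr b0) rest = c1" by (metis untag_tagc untag_def sum.simps(5))
  have filt: "{x \<in> S. fst x \<noteq> b0} = S'" unfolding S_def using b0nS by force
  show "bulmap V1 V2 (bulinv n V1 V2 x) = x"
    unfolding bi bulmap_def Let_def using blk0 b01 mr filt dec xe by simp
qed

theorem iso_Cbul_Suc:
  assumes n: "0 < n"
  shows "species_iso (Cbul (Suc n) :: ('a, 'a spp list) species)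
            (sp_prod (Cbul n) (sp_comp_E (sp_sum (Cbul n) (Ctimes n))))"
  proof (rule species_isoI[where \<phi> = bulmap])
    fix V1 V2 :: "'a set" assume adm: "admissible V1 V2"
    show "bij_betw (bulmap V1 V2) (fst (Cbul (Suc n)) V1 V2)
            (fst (sp_prod (Cbul n) (sp_comp_E (sp_sum (Cbul n) (Ctimes n)))) V1 V2)"
      by (rule bij_betw_byWitness[where f' = "bulinv n V1 V2"])
         (use bul_fwd[OF adm n] bul_bwd[OF adm n] in auto)
  next
    fix V1 V2 W1 W2 :: "'a set" and \<sigma> s
    assume a: "admissible V1 V2" "admissible W1 W2" "bij_betw \<sigma> V1 W1" "bij_betw \<sigma> V2 W2"
      "s \<in> fst (Cbul (Suc n)) V1 V2"
    have inj: "inj_on \<sigma> (V1 \<union> V2)" and i1: "\<sigma> ` V1 = W1" and i2: "\<sigma> ` V2 = W2"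
      using bij_inj_Un[OF a(2,3,4)] by auto
    have dW: "W1 \<inter> W2 = {}" using a(2) unfolding admissible_def by simp
    obtain v where v: "v \<in> V1" "hd s = mpt V1 V2 v" and mc: "multichain_in (SPP V1 V2) (Suc n) s"
      and ne: "s \<noteq> []" using a(5) unfolding Cbul_mem by blast
    define rest where "rest = tl s"
    have s_eq: "s = mpt V1 V2 v # rest" using ne v unfolding rest_def by (cases s) auto
    have mcr: "multichain_in (SPP V1 V2) n rest" unfolding rest_def using mc_tl[OF mc] .
    have P0: "hd rest \<in> SPP V1 V2" using mc_hd_mem[OF mcr n] .
    have "sp_le (mpt V1 V2 v) (hd rest)"
      using mc_le[OF mc, of 0] n mc_hd[OF mcr n] unfolding s_eq by simp
    then obtain b0 where b0: "(b0, Some v) \<in> hd rest" using le_mpt[OF P0] by auto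
    have blk0: "blk v (hd rest) = b0" using blk_eq[OF P0 b0] .
    have b0V: "b0 \<subseteq> V1 \<union> V2" using SPP_D(7)[OF P0 b0] .
    have ner: "rest \<noteq> []" using mc_len[OF mcr] n by auto
    have P0': "relP \<sigma> (hd rest) \<in> SPP W1 W2" using relP_SPP[OF inj i1 i2 dW P0] .
    have b0': "(\<sigma> ` b0, Some (\<sigma> v)) \<in> relP \<sigma> (hd rest)" using b0 unfolding relP_def by force
    have blk1: "blk (\<sigma> v) (hd (map (relP \<sigma>) rest)) = \<sigma> ` b0"
      using blk_eq[OF P0' b0'] ner by (simp add: hd_map)
    have int1: "\<sigma> ` b0 \<inter> W1 = \<sigma> ` (b0 \<inter> V1)" "\<sigma> ` b0 \<inter> W2 = \<sigma> ` (b0 \<inter> V2)"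
      using inj_on_image_Int[OF inj b0V, of V1] inj_on_image_Int[OF inj b0V, of V2] i1 i2 by auto
    have filt: "{x \<in> decT (map (relP \<sigma>) rest). fst x \<noteq> \<sigma> ` b0} =
        comp_E_transport (sp_sum (Cbul n) (Ctimes n)) \<sigma> {x \<in> decT rest. fst x \<noteq> b0}"
      unfolding decT_nat[OF inj n mcr]
    proof (rule transport_filter)
      fix x assume "x \<in> decT rest"
      hence "fst x \<in> fst ` hd rest" using decT_fst by force
      hence "fst x \<subseteq> V1 \<union> V2" using SPP_D(7)[OF P0] by force
      thus "(\<sigma> ` fst x \<noteq> \<sigma> ` b0) = (fst x \<noteq> b0)" using inj_on_image_eq_iff[OF inj _ b0V] by blast
    qed
    have hds: "hd (map (relP \<sigma>) s) = mpt W1 W2 (\<sigma> v)" using s_eq relP_mpt[OF i1 i2] by simp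
    show "bulmap W1 W2 (snd (Cbul (Suc n)) \<sigma> s) =
          snd (sp_prod (Cbul n) (sp_comp_E (sp_sum (Cbul n) (Ctimes n)))) \<sigma> (bulmap V1 V2 s)"
    proof -
      have L: "bulmap W1 W2 (snd (Cbul (Suc n)) \<sigma> s) =
        ((\<sigma> ` b0 \<inter> W1, \<sigma> ` b0 \<inter> W2), map (restr (\<sigma> ` b0)) (map (relP \<sigma>) rest),
          {x \<in> decT (map (relP \<sigma>) rest). fst x \<noteq> \<sigma> ` b0})"
      proof -
        have "snd (Cbul (Suc n)) \<sigma> s = map (relP \<sigma>) s" by (simp add: Cbul_def)
        moreover have "tl (map (relP \<sigma>) s) = map (relP \<sigma>) rest" using s_eq by simp
        ultimately show ?thesis unfolding bulmap_def Let_def using hds blk1 by simp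
      qed
      have R0: "bulmap V1 V2 s = ((b0 \<inter> V1, b0 \<inter> V2), map (restr b0) rest, {x \<in> decT rest. fst x \<noteq> b0})"
        unfolding bulmap_def Let_def using v(2) blk0 unfolding rest_def by simp
      have R: "snd (sp_prod (Cbul n) (sp_comp_E (sp_sum (Cbul n) (Ctimes n)))) \<sigma> (bulmap V1 V2 s) =
        ((\<sigma> ` (b0 \<inter> V1), \<sigma> ` (b0 \<inter> V2)), map (relP \<sigma>) (map (restr b0) rest),
          comp_E_transport (sp_sum (Cbul n) (Ctimes n)) \<sigma> {x \<in> decT rest. fst x \<noteq> b0})"
        unfolding R0 by (simp add: sp_prod_def sp_comp_E_def Cbul_def)
      show ?thesis unfolding L R using int1 filt maprestr_nat[OF inj mcr b0V] by simp
    qed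
  qed

theorem iso_Cbul:
  assumes k: "2 \<le> k"
  shows "species_iso (Cbul k :: ('a, 'a spp list) species)
            (sp_prod (Cbul (k - 1)) (sp_comp_E (sp_sum (Cbul (k - 1)) (Ctimes (k - 1)))))"
proof -
  obtain n where kn: "k = Suc n" and n: "0 < n" using k by (cases k) auto
  show ?thesis using iso_Cbul_Suc[OF n] unfolding kn by simp
qed


section \<open>The unpointed decomposition\<close>

definition inrs :: "('b \<times> ('c + 'c)) set \<Rightarrow> ('b \<times> 'c) set" where
  "inrs D = {(J, c). (J, Inr c) \<in> D}"

definition inls :: "('b \<times> ('c + 'c)) set \<Rightarrow> ('b \<times> 'c) set" where
  "inls D = {(J, c). (J, Inl c) \<in> D}"

definition tagR :: "('b \<times> 'c) set \<Rightarrow> ('b \<times> ('c + 'c)) set" where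
  "tagR S = (\<lambda>(J, c). (J, Inr c)) ` S"

definition tagL :: "('b \<times> 'c) set \<Rightarrow> ('b \<times> ('c + 'c)) set" where
  "tagL S = (\<lambda>(J, c). (J, Inl c)) ` S"

lemma tag_split: "tagR (inrs D) \<union> tagL (inls D) = D"
proof
  show "tagR (inrs D) \<union> tagL (inls D) \<subseteq> D" unfolding tagR_def tagL_def inrs_def inls_def by auto
  show "D \<subseteq> tagR (inrs D) \<union> tagL (inls D)"
  proof
    fix x assume x: "x \<in> D"
    obtain J t where xe: "x = (J,t)" by (cases x)
    show "x \<in> tagR (inrs D) \<union> tagL (inls D)"
    proof (cases t)
      case (Inl c)
      hence "(J,c) \<in> inls D" using x xe unfolding inls_def by simp
      thus ?thesis unfolding tagL_def using xe Inl by force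
    next
      case (Inr c)
      hence "(J,c) \<in> inrs D" using x xe unfolding inrs_def by simp
      thus ?thesis unfolding tagR_def using xe Inr by force
    qed
  qed
qed

lemma inrs_tag[simp]: "inrs (tagR S1 \<union> tagL S2) = S1"
  unfolding inrs_def tagR_def tagL_def by force

lemma inls_tag[simp]: "inls (tagR S1 \<union> tagL S2) = S2"
  unfolding inls_def tagR_def tagL_def by force

lemma mem_transport:
  "y \<in> comp_E_transport F \<sigma> D \<longleftrightarrow> (\<exists>J t. (J,t) \<in> D \<and> y = (\<sigma> ` J, snd F \<sigma> t))"
proof
  assume "y \<in> comp_E_transport F \<sigma> D"
  then obtain x where x: "x \<in> D" "y = (\<lambda>(J, s). (\<sigma> ` J, snd F \<sigma> s)) x"
    unfolding comp_E_transport_def by blast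
  obtain J t where "x = (J,t)" by (cases x)
  thus "\<exists>J t. (J,t) \<in> D \<and> y = (\<sigma> ` J, snd F \<sigma> t)" using x by auto
next
  assume "\<exists>J t. (J,t) \<in> D \<and> y = (\<sigma> ` J, snd F \<sigma> t)"
  then obtain J t where "(J,t) \<in> D" "y = (\<sigma> ` J, snd F \<sigma> t)" by blast
  thus "y \<in> comp_E_transport F \<sigma> D" unfolding comp_E_transport_def
    by (intro image_eqI[where x = "(J,t)"]) auto
qed

lemma inrs_transport:
  "inrs (comp_E_transport (sp_sum (Cbul n) (Ctimes n)) \<sigma> D) = comp_E_transport (Ctimes n) \<sigma> (inrs D)"
proof -
  have e: "snd (Ctimes n) \<sigma> = map (relP \<sigma>)" by (simp add: Ctimes_def)
  show ?thesis
  proof (rule set_eqI)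
    fix y :: "'a set \<times> 'a spp list"
    obtain J' c' where y: "y = (J', c')" by (cases y)
    have "y \<in> inrs (comp_E_transport (sp_sum (Cbul n) (Ctimes n)) \<sigma> D) \<longleftrightarrow>
        (\<exists>J t. (J,t) \<in> D \<and> J' = \<sigma> ` J \<and> Inr c' = map_sum (map (relP \<sigma>)) (map (relP \<sigma>)) t)"
      unfolding y inrs_def mem_transport snd_SF by auto
    also have "\<dots> \<longleftrightarrow> (\<exists>J c. (J, Inr c) \<in> D \<and> J' = \<sigma> ` J \<and> c' = map (relP \<sigma>) c)"
    proof
      assume "\<exists>J t. (J,t) \<in> D \<and> J' = \<sigma> ` J \<and> Inr c' = map_sum (map (relP \<sigma>)) (map (relP \<sigma>)) t"
      then obtain J t where Jt: "(J,t) \<in> D" "J' = \<sigma> ` J" "Inr c' = map_sum (map (relP \<sigma>)) (map (relP \<sigma>)) t"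
        by blast
      then obtain c where "t = Inr c" "c' = map (relP \<sigma>) c" by (cases t) auto
      thus "\<exists>J c. (J, Inr c) \<in> D \<and> J' = \<sigma> ` J \<and> c' = map (relP \<sigma>) c" using Jt by blast
    next
      assume "\<exists>J c. (J, Inr c) \<in> D \<and> J' = \<sigma> ` J \<and> c' = map (relP \<sigma>) c"
      then obtain J c where "(J, Inr c) \<in> D" "J' = \<sigma> ` J" "c' = map (relP \<sigma>) c" by blast
      thus "\<exists>J t. (J,t) \<in> D \<and> J' = \<sigma> ` J \<and> Inr c' = map_sum (map (relP \<sigma>)) (map (relP \<sigma>)) t"
        by (intro exI[of _ J] exI[of _ "Inr c"]) simp
    qed
    also have "\<dots> \<longleftrightarrow> y \<in> comp_E_transport (Ctimes n) \<sigma> (inrs D)"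
      unfolding y mem_transport e inrs_def by auto
    finally show "y \<in> inrs (comp_E_transport (sp_sum (Cbul n) (Ctimes n)) \<sigma> D) \<longleftrightarrow>
                  y \<in> comp_E_transport (Ctimes n) \<sigma> (inrs D)" .
  qed
qed

lemma inls_transport:
  "inls (comp_E_transport (sp_sum (Cbul n) (Ctimes n)) \<sigma> D) = comp_E_transport (Cbul n) \<sigma> (inls D)"
proof -
  have e: "snd (Cbul n) \<sigma> = map (relP \<sigma>)" by (simp add: Cbul_def)
  show ?thesis
  proof (rule set_eqI)
    fix y :: "'a set \<times> 'a spp list"
    obtain J' c' where y: "y = (J', c')" by (cases y)
    have "y \<in> inls (comp_E_transport (sp_sum (Cbul n) (Ctimes n)) \<sigma> D) \<longleftrightarrow>
        (\<exists>J t. (J,t) \<in> D \<and> J' = \<sigma> ` J \<and> Inl c' = map_sum (map (relP \<sigma>)) (map (relP \<sigma>)) t)"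
      unfolding y inls_def mem_transport snd_SF by auto
    also have "\<dots> \<longleftrightarrow> (\<exists>J c. (J, Inl c) \<in> D \<and> J' = \<sigma> ` J \<and> c' = map (relP \<sigma>) c)"
    proof
      assume "\<exists>J t. (J,t) \<in> D \<and> J' = \<sigma> ` J \<and> Inl c' = map_sum (map (relP \<sigma>)) (map (relP \<sigma>)) t"
      then obtain J t where Jt: "(J,t) \<in> D" "J' = \<sigma> ` J" "Inl c' = map_sum (map (relP \<sigma>)) (map (relP \<sigma>)) t"
        by blast
      then obtain c where "t = Inl c" "c' = map (relP \<sigma>) c" by (cases t) auto
      thus "\<exists>J c. (J, Inl c) \<in> D \<and> J' = \<sigma> ` J \<and> c' = map (relP \<sigma>) c" using Jt by blast
    next
      assume "\<exists>J c. (J, Inl c) \<in> D \<and> J' = \<sigma> ` J \<and> c' = map (relP \<sigma>) c"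
      then obtain J c where "(J, Inl c) \<in> D" "J' = \<sigma> ` J" "c' = map (relP \<sigma>) c" by blast
      thus "\<exists>J t. (J,t) \<in> D \<and> J' = \<sigma> ` J \<and> Inl c' = map_sum (map (relP \<sigma>)) (map (relP \<sigma>)) t"
        by (intro exI[of _ J] exI[of _ "Inl c"]) simp
    qed
    also have "\<dots> \<longleftrightarrow> y \<in> comp_E_transport (Cbul n) \<sigma> (inls D)"
      unfolding y mem_transport e inls_def by auto
    finally show "y \<in> inls (comp_E_transport (sp_sum (Cbul n) (Ctimes n)) \<sigma> D) \<longleftrightarrow>
                  y \<in> comp_E_transport (Cbul n) \<sigma> (inls D)" .
  qed
qed

lemma fst_inrs_transport: "fst ` comp_E_transport F \<sigma> S = (\<lambda>J. \<sigma> ` J) ` fst ` S"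
  unfolding comp_E_transport_def by (simp add: image_image case_prod_beta')

definition ctmap :: "'a set \<Rightarrow> 'a set \<Rightarrow> 'a spp list \<Rightarrow>
    ('a set \<times> 'a set) \<times> ('a set \<times> 'a spp list) set \<times> ('a set \<times> 'a spp list) set" where
  "ctmap V1 V2 cs = (let D = decT (tl cs); U = \<Union>(fst ` inrs D) in
     ((U \<inter> V1, U \<inter> V2), inrs D, inls D))"

definition ctinv :: "nat \<Rightarrow> 'a set \<Rightarrow> 'a set \<Rightarrow>
    ('a set \<times> 'a set) \<times> ('a set \<times> 'a spp list) set \<times> ('a set \<times> 'a spp list) set \<Rightarrow> 'a spp list" where
  "ctinv n V1 V2 x = (case x of ((I1, J1), S1, S2) \<Rightarrow>
      mcross V1 V2 # glue n (tagR S1 \<union> tagL S2))"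

lemma ct_fwd:
  assumes adm: "admissible V1 V2" and n: "0 < n" and cs: "cs \<in> fst (Ctimes (Suc n)) V1 V2"
  shows "ctmap V1 V2 cs \<in> fst (sp_prod (sp_comp_E1 (Ctimes n)) (sp_comp_E (Cbul n))) V1 V2"
    and "ctinv n V1 V2 (ctmap V1 V2 cs) = cs"
proof -
  have mc: "multichain_in (SPP V1 V2) (Suc n) cs" and ne: "cs \<noteq> []" and h: "hd cs = mcross V1 V2"
    using cs unfolding Ctimes_mem by auto
  define rest where "rest = tl cs"
  have cs_eq: "cs = mcross V1 V2 # rest" using ne h unfolding rest_def by (cases cs) auto
  have mcr: "multichain_in (SPP V1 V2) n rest" unfolding rest_def using mc_tl[OF mc] .
  have P0: "hd rest \<in> SPP V1 V2" using mc_hd_mem[OF mcr n] .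
  have "sp_le (mcross V1 V2) (hd rest)"
    using mc_le[OF mc, of 0] n mc_hd[OF mcr n] unfolding cs_eq by simp
  then obtain b where b: "(b, None) \<in> hd rest" using le_mcross[OF P0] by auto
  define D where "D = decT rest"
  have Dm: "D \<in> comp_E_carrier (sp_sum (Cbul n) (Ctimes n)) V1 V2" unfolding D_def using D1(1)[OF n mcr] .
  from Dm have spD: "is_setpart (V1 \<union> V2) (fst ` D)" and injD: "inj_on fst D"
    and stD: "\<And>J s. (J,s) \<in> D \<Longrightarrow> s \<in> fst (sp_sum (Cbul n) (Ctimes n)) (J \<inter> V1) (J \<inter> V2)"
    unfolding comp_E_carrier_def by auto
  have ne_blk: "J \<noteq> {}" "J \<subseteq> V1 \<union> V2" if "J \<in> fst ` D" for J using spD that unfolding is_setpart_def by auto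
  have dis_blk: "J \<inter> J' = {}" if "J \<in> fst ` D" "J' \<in> fst ` D" "J \<noteq> J'" for J J'
    using spD that unfolding is_setpart_def by auto
  define S1 where "S1 = inrs D"
  define S2 where "S2 = inls D"
  define U where "U = \<Union>(fst ` S1)"
  have f1: "fst ` S1 \<subseteq> fst ` D" unfolding S1_def inrs_def by force
  have f2: "fst ` S2 \<subseteq> fst ` D" unfolding S2_def inls_def by force
  have noboth: "False" if nb: "(J, Inr c) \<in> D" "(J, Inl c') \<in> D" for J c c'
  proof -
    have "(J, Inr c) = (J, Inl c')" using inj_onD[OF injD _ nb(1) nb(2)] by simp
    thus False by simp
  qed
  have UV: "U \<subseteq> V1 \<union> V2"
  proof
    fix x assume "x \<in> U"
    then obtain J where "J \<in> fst ` S1" "x \<in> J" unfolding U_def by blast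
    thus "x \<in> V1 \<union> V2" using f1 ne_blk(2) by blast
  qed
  have cm: "ctmap V1 V2 cs = ((U \<inter> V1, U \<inter> V2), S1, S2)"
    unfolding ctmap_def Let_def cs_eq U_def S1_def S2_def D_def by simp
  have hdb: "hd (map (restr b) rest) = {(b, None)}" using chain_block(2)[OF n mcr b] .
  have "(b, Inr (map (restr b) rest)) \<in> D" unfolding D_def decT_mem using b hdb by (force simp: tagc_def)
  hence S1ne: "S1 \<noteq> {}" unfolding S1_def inrs_def by auto
  have S1m: "S1 \<in> comp_E_carrier (Ctimes n) (U \<inter> V1) (U \<inter> V2)"
    unfolding comp_E_carrier_def
  proof (intro CollectI conjI)
    have "U \<inter> V1 \<union> U \<inter> V2 = U" using UV by auto
    moreover have "is_setpart U (fst ` S1)"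
    proof -
      have "\<forall>B\<in>fst ` S1. B \<noteq> {}" using f1 ne_blk(1) by blast
      moreover have "\<forall>B\<in>fst ` S1. \<forall>B'\<in>fst ` S1. B \<noteq> B' \<longrightarrow> B \<inter> B' = {}"
      proof (intro ballI impI)
        fix B B' assume "B \<in> fst ` S1" "B' \<in> fst ` S1" "B \<noteq> B'"
        thus "B \<inter> B' = {}" using dis_blk[of B B'] f1 by blast
      qed
      ultimately show ?thesis unfolding is_setpart_def U_def by blast
    qed
    ultimately show "is_setpart (U \<inter> V1 \<union> U \<inter> V2) (fst ` S1)" by simp
    show "inj_on fst S1"
    proof (rule inj_onI)
      fix a b assume ab: "a \<in> S1" "b \<in> S1" "fst a = fst b"
      obtain J c J' c' where e: "a = (J,c)" "b = (J',c')" by (cases a, cases b)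
      have "(J, Inr c) \<in> D" "(J', Inr c') \<in> D" using ab e unfolding S1_def inrs_def by auto
      moreover have "J = J'" using ab(3) e by simp
      ultimately show "a = b" using inj_onD[OF injD, of "(J, Inr c)" "(J', Inr c')"] e by simp
    qed
    show "\<forall>(J, s)\<in>S1. s \<in> fst (Ctimes n) (J \<inter> (U \<inter> V1)) (J \<inter> (U \<inter> V2))"
    proof clarify
      fix J c assume Jc: "(J,c) \<in> S1"
      hence JD: "(J, Inr c) \<in> D" unfolding S1_def inrs_def by simp
      have "J \<subseteq> U" using Jc unfolding U_def by force
      hence "J \<inter> (U \<inter> V1) = J \<inter> V1" "J \<inter> (U \<inter> V2) = J \<inter> V2" by auto
      thus "c \<in> fst (Ctimes n) (J \<inter> (U \<inter> V1)) (J \<inter> (U \<inter> V2))" using stD[OF JD] unfolding carrier_sum by auto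
    qed
  qed
  have JU: "J \<inter> U = {}" if "J \<in> fst ` S2" for J
  proof -
    have "J \<inter> J' = {}" if J': "J' \<in> fst ` S1" for J'
    proof -
      have "J \<noteq> J'"
      proof
        assume "J = J'"
        obtain c where "(J, c) \<in> S2" using \<open>J \<in> fst ` S2\<close> by force
        moreover obtain c' where "(J, c') \<in> S1" using J' \<open>J = J'\<close> by force
        ultimately have "(J, Inl c) \<in> D" "(J, Inr c') \<in> D" unfolding S1_def S2_def inrs_def inls_def by auto
        thus False using noboth by blast
      qed
      moreover have "J \<in> fst ` D" "J' \<in> fst ` D" using f1 f2 \<open>J \<in> fst ` S2\<close> J' by auto
      ultimately show ?thesis using dis_blk by blast
    qed
    thus ?thesis unfolding U_def by blast
  qed
  have VV: "(V1 - U \<inter> V1) \<union> (V2 - U \<inter> V2) = V1 \<union> V2 - U" by auto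
  have S2m: "S2 \<in> comp_E_carrier (Cbul n) (V1 - U \<inter> V1) (V2 - U \<inter> V2)"
    unfolding comp_E_carrier_def
  proof (intro CollectI conjI)
    have "\<Union>(fst ` S2) = V1 \<union> V2 - U"
    proof
      show "\<Union>(fst ` S2) \<subseteq> V1 \<union> V2 - U"
      proof
        fix x assume "x \<in> \<Union>(fst ` S2)"
        then obtain J where J: "J \<in> fst ` S2" "x \<in> J" by blast
        have "J \<in> fst ` D" using f2 J(1) by blast
        hence "J \<subseteq> V1 \<union> V2" by (rule ne_blk(2))
        moreover have "x \<notin> U" using JU[OF J(1)] J(2) by blast
        ultimately show "x \<in> V1 \<union> V2 - U" using J(2) by blast
      qed
      show "V1 \<union> V2 - U \<subseteq> \<Union>(fst ` S2)"
      proof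
        fix x assume x: "x \<in> V1 \<union> V2 - U"
        have "x \<in> \<Union>(fst ` D)" using spD x unfolding is_setpart_def by auto
        then obtain J where J: "J \<in> fst ` D" "x \<in> J" by blast
        then obtain t where Jt: "(J,t) \<in> D" by auto
        show "x \<in> \<Union>(fst ` S2)"
        proof (cases t)
          case (Inl c)
          hence "(J,c) \<in> S2" using Jt unfolding S2_def inls_def by simp
          thus ?thesis using J by force
        next
          case (Inr c)
          hence "(J,c) \<in> S1" using Jt unfolding S1_def inrs_def by simp
          hence "x \<in> U" using J unfolding U_def by force
          thus ?thesis using x by simp
        qed
      qed
    qed
    moreover have "\<forall>B\<in>fst ` S2. B \<noteq> {}" using f2 ne_blk(1) by blast
    moreover have "\<forall>B\<in>fst ` S2. \<forall>B'\<in>fst ` S2. B \<noteq> B' \<longrightarrow> B \<inter> B' = {}"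
    proof (intro ballI impI)
      fix B B' assume "B \<in> fst ` S2" "B' \<in> fst ` S2" "B \<noteq> B'"
      thus "B \<inter> B' = {}" using dis_blk[of B B'] f2 by blast
    qed
    ultimately show "is_setpart (V1 - U \<inter> V1 \<union> (V2 - U \<inter> V2)) (fst ` S2)"
      unfolding VV is_setpart_def by blast
    show "inj_on fst S2"
    proof (rule inj_onI)
      fix a b assume ab: "a \<in> S2" "b \<in> S2" "fst a = fst b"
      obtain J c J' c' where e: "a = (J,c)" "b = (J',c')" by (cases a, cases b)
      have "(J, Inl c) \<in> D" "(J', Inl c') \<in> D" using ab e unfolding S2_def inls_def by auto
      moreover have "J = J'" using ab(3) e by simp
      ultimately show "a = b" using inj_onD[OF injD, of "(J, Inl c)" "(J', Inl c')"] e by simp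
    qed
    show "\<forall>(J, s)\<in>S2. s \<in> fst (Cbul n) (J \<inter> (V1 - U \<inter> V1)) (J \<inter> (V2 - U \<inter> V2))"
    proof clarify
      fix J c assume Jc: "(J,c) \<in> S2"
      hence JD: "(J, Inl c) \<in> D" unfolding S2_def inls_def by simp
      have "J \<inter> U = {}" using JU Jc by force
      hence "J \<inter> (V1 - U \<inter> V1) = J \<inter> V1" "J \<inter> (V2 - U \<inter> V2) = J \<inter> V2" by auto
      thus "c \<in> fst (Cbul n) (J \<inter> (V1 - U \<inter> V1)) (J \<inter> (V2 - U \<inter> V2))" using stD[OF JD] unfolding carrier_sum by auto
    qed
  qed
  show "ctmap V1 V2 cs \<in> fst (sp_prod (sp_comp_E1 (Ctimes n)) (sp_comp_E (Cbul n))) V1 V2"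
    unfolding cm carrier_prod
  proof (intro exI conjI)
    show "((U \<inter> V1, U \<inter> V2), S1, S2) = ((U \<inter> V1, U \<inter> V2), S1, S2)" ..
    show "U \<inter> V1 \<subseteq> V1" "U \<inter> V2 \<subseteq> V2" by auto
    show "S1 \<in> fst (sp_comp_E1 (Ctimes n)) (U \<inter> V1) (U \<inter> V2)"
      using S1m S1ne by (simp add: sp_comp_E1_def)
    show "S2 \<in> fst (sp_comp_E (Cbul n)) (V1 - U \<inter> V1) (V2 - U \<inter> V2)"
      using S2m by (simp add: sp_comp_E_def)
  qed
  show "ctinv n V1 V2 (ctmap V1 V2 cs) = cs"
  proof -
    have "tagR S1 \<union> tagL S2 = D" unfolding S1_def S2_def by (rule tag_split)
    hence "glue n (tagR S1 \<union> tagL S2) = rest" using D1(2)[OF n mcr] unfolding D_def by simp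
    thus ?thesis unfolding cm ctinv_def using cs_eq by simp
  qed
qed

lemma ct_bwd:
  assumes adm: "admissible V1 V2" and n: "0 < n"
    and x: "x \<in> fst (sp_prod (sp_comp_E1 (Ctimes n)) (sp_comp_E (Cbul n))) V1 V2"
  shows "ctinv n V1 V2 x \<in> fst (Ctimes (Suc n)) V1 V2"
    and "ctmap V1 V2 (ctinv n V1 V2 x) = x"
proof -
  have disj: "V1 \<inter> V2 = {}" using adm unfolding admissible_def by simp
  obtain I1 J1 S1 S2 where xe: "x = ((I1,J1), S1, S2)" and IJ: "I1 \<subseteq> V1" "J1 \<subseteq> V2"
    and S1': "S1 \<in> fst (sp_comp_E1 (Ctimes n)) I1 J1"
    and S2': "S2 \<in> fst (sp_comp_E (Cbul n)) (V1 - I1) (V2 - J1)"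
    using x unfolding carrier_prod by blast
  have S1: "S1 \<in> comp_E_carrier (Ctimes n) I1 J1" "S1 \<noteq> {}" using S1' by (simp_all add: sp_comp_E1_def)
  have S2: "S2 \<in> comp_E_carrier (Cbul n) (V1 - I1) (V2 - J1)" using S2' by (simp add: sp_comp_E_def)
  define U where "U = I1 \<union> J1"
  have U1: "U \<inter> V1 = I1" "U \<inter> V2 = J1" using IJ disj unfolding U_def by auto
  have UV: "U \<subseteq> V1 \<union> V2" using IJ unfolding U_def by auto
  have sp1: "is_setpart U (fst ` S1)" and inj1: "inj_on fst S1"
    and st1: "\<And>J c. (J,c) \<in> S1 \<Longrightarrow> c \<in> fst (Ctimes n) (J \<inter> I1) (J \<inter> J1)"
    using S1(1) unfolding comp_E_carrier_def U_def by auto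
  have VV: "(V1 - I1) \<union> (V2 - J1) = V1 \<union> V2 - U" using IJ disj unfolding U_def by auto
  have sp2': "is_setpart ((V1 - I1) \<union> (V2 - J1)) (fst ` S2)" and inj2: "inj_on fst S2"
    and st2: "\<And>J c. (J,c) \<in> S2 \<Longrightarrow> c \<in> fst (Cbul n) (J \<inter> (V1 - I1)) (J \<inter> (V2 - J1))"
    using S2 unfolding comp_E_carrier_def by auto
  have sp2: "is_setpart (V1 \<union> V2 - U) (fst ` S2)" using sp2' unfolding VV .
  have sub1: "J \<subseteq> U" "J \<noteq> {}" if "J \<in> fst ` S1" for J using sp1 that unfolding is_setpart_def by auto
  have sub2: "J \<subseteq> V1 \<union> V2 - U" "J \<noteq> {}" if "J \<in> fst ` S2" for J using sp2 that unfolding is_setpart_def by auto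
  define S where "S = tagR S1 \<union> tagL S2"
  have fS: "fst ` S = fst ` S1 \<union> fst ` S2" unfolding S_def tagR_def tagL_def by force
  have Sm: "S \<in> comp_E_carrier (sp_sum (Cbul n) (Ctimes n)) V1 V2"
    unfolding comp_E_carrier_def
  proof (intro CollectI conjI)
    have "is_setpart (U \<union> (V1 \<union> V2 - U)) (fst ` S1 \<union> fst ` S2)"
      by (rule setpart_union[OF sp1 sp2]) auto
    moreover have "U \<union> (V1 \<union> V2 - U) = V1 \<union> V2" using UV by auto
    ultimately show "is_setpart (V1 \<union> V2) (fst ` S)" unfolding fS by simp
    show "inj_on fst S"
    proof (rule inj_onI)
      fix a b assume ab: "a \<in> S" "b \<in> S" "fst a = fst b"
      show "a = b"
        using ab unfolding S_def tagR_def tagL_def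
      proof (elim UnE imageE)
        fix p q assume pq: "a = (case p of (J, c) \<Rightarrow> (J, Inr c))" "p \<in> S1" "b = (case q of (J, c) \<Rightarrow> (J, Inr c))" "q \<in> S1"
        have "fst p = fst q" using pq(1,3) ab(3) by (auto split: prod.splits)
        hence "p = q" using inj_onD[OF inj1 _ pq(2) pq(4)] by simp
        thus "a = b" using pq(1,3) by simp
      next
        fix p q assume pq: "a = (case p of (J, c) \<Rightarrow> (J, Inl c))" "p \<in> S2" "b = (case q of (J, c) \<Rightarrow> (J, Inl c))" "q \<in> S2"
        have "fst p = fst q" using pq(1,3) ab(3) by (auto split: prod.splits)
        hence "p = q" using inj_onD[OF inj2 _ pq(2) pq(4)] by simp
        thus "a = b" using pq(1,3) by simp
      next
        fix p q assume a: "a = (case p of (J, c) \<Rightarrow> (J, Inr c))" "p \<in> S1" "b = (case q of (J, c) \<Rightarrow> (J, Inl c))" "q \<in> S2"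
        have "fst p = fst q" using a ab(3) by (auto split: prod.splits)
        moreover have "fst p \<subseteq> U" "fst p \<noteq> {}" using sub1 a(2) by auto
        moreover have "fst q \<subseteq> V1 \<union> V2 - U" using sub2 a(4) by auto
        ultimately show "a = b" by blast
      next
        fix p q assume a: "a = (case p of (J, c) \<Rightarrow> (J, Inl c))" "p \<in> S2" "b = (case q of (J, c) \<Rightarrow> (J, Inr c))" "q \<in> S1"
        have "fst p = fst q" using a ab(3) by (auto split: prod.splits)
        moreover have "fst q \<subseteq> U" "fst q \<noteq> {}" using sub1 a(4) by auto
        moreover have "fst p \<subseteq> V1 \<union> V2 - U" using sub2 a(2) by auto
        ultimately show "a = b" by blast
      qed
    qed
    show "\<forall>(J, s)\<in>S. s \<in> fst (sp_sum (Cbul n) (Ctimes n)) (J \<inter> V1) (J \<inter> V2)"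
    proof clarify
      fix J s assume "(J,s) \<in> S"
      then consider c where "(J,c) \<in> S1" "s = Inr c" | c where "(J,c) \<in> S2" "s = Inl c"
        unfolding S_def tagR_def tagL_def by auto
      thus "s \<in> fst (sp_sum (Cbul n) (Ctimes n)) (J \<inter> V1) (J \<inter> V2)"
      proof cases
        case 1
        have "J \<subseteq> U" using sub1 1(1) by force
        hence "J \<inter> I1 = J \<inter> V1" "J \<inter> J1 = J \<inter> V2" using U1 by auto
        thus ?thesis using st1[OF 1(1)] 1(2) unfolding carrier_sum by auto
      next
        case 2
        have "J \<subseteq> V1 \<union> V2 - U" using sub2 2(1) by force
        hence "J \<inter> (V1 - I1) = J \<inter> V1" "J \<inter> (V2 - J1) = J \<inter> V2" unfolding U_def by auto
        thus ?thesis using st2[OF 2(1)] 2(2) unfolding carrier_sum by auto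
      qed
    qed
  qed
  define rest where "rest = glue n S"
  have mcr: "multichain_in (SPP V1 V2) n rest" unfolding rest_def using D2(1)[OF n Sm] .
  have dec: "decT rest = S" unfolding rest_def using D2(2)[OF n Sm] .
  have hdr: "hd rest = (\<Union>x\<in>S. hd (untag (snd x)))" unfolding rest_def using D2(3)[OF n Sm] .
  obtain J c where Jc: "(J,c) \<in> S1" using S1(2) by auto
  have "J \<subseteq> U" using sub1 Jc by force
  hence JJ: "J \<inter> I1 \<union> J \<inter> J1 = J" unfolding U_def by auto
  have "hd c = mcross (J \<inter> I1) (J \<inter> J1)" using st1[OF Jc] unfolding Ctimes_mem by simp
  hence hdc: "hd c = {(J, None)}" unfolding mcross_def JJ .
  have JS: "(J, Inr c) \<in> S" unfolding S_def tagR_def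
    by (rule UnI1, rule image_eqI[where x = "(J,c)"]) (use Jc in auto)
  have "hd (untag (snd (J, Inr c))) \<subseteq> hd rest" unfolding hdr using JS by blast
  hence "hd c \<subseteq> hd rest" by (simp add: untag_def)
  hence Jr: "(J, None) \<in> hd rest" using hdc by simp
  have P0: "hd rest \<in> SPP V1 V2" using mc_hd_mem[OF mcr n] .
  have "\<not> J \<subseteq> V1" using SPP_D(5)[OF P0 Jr] by auto
  moreover have "J \<subseteq> V1 \<union> V2" using SPP_D(7)[OF P0 Jr] .
  ultimately have V2ne: "V2 \<noteq> {}" by auto
  have ci: "ctinv n V1 V2 x = mcross V1 V2 # rest" unfolding xe ctinv_def rest_def S_def by simp
  have "multichain_in (SPP V1 V2) (Suc n) (mcross V1 V2 # rest)"
    by (rule mc_Cons[OF mcr mcross_SPP[OF disj V2ne]]) (use le_mcross[OF P0] Jr in blast)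
  thus "ctinv n V1 V2 x \<in> fst (Ctimes (Suc n)) V1 V2" unfolding ci Ctimes_mem by simp
  have US: "\<Union>(fst ` S1) = U" using sp1 unfolding is_setpart_def by simp
  have "ctmap V1 V2 (ctinv n V1 V2 x) = ((U \<inter> V1, U \<inter> V2), S1, S2)"
    unfolding ci ctmap_def Let_def list.sel(3) dec S_def inrs_tag inls_tag US ..
  thus "ctmap V1 V2 (ctinv n V1 V2 x) = x" unfolding U1 xe .
qed

theorem iso_Ctimes_Suc:
  assumes n: "0 < n"
  shows "species_iso (Ctimes (Suc n) :: ('a, 'a spp list) species)
            (sp_prod (sp_comp_E1 (Ctimes n)) (sp_comp_E (Cbul n)))"
proof (rule species_isoI[where \<phi> = ctmap])
  fix V1 V2 :: "'a set" assume adm: "admissible V1 V2"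
  show "bij_betw (ctmap V1 V2) (fst (Ctimes (Suc n)) V1 V2)
          (fst (sp_prod (sp_comp_E1 (Ctimes n)) (sp_comp_E (Cbul n))) V1 V2)"
    by (rule bij_betw_byWitness[where f' = "ctinv n V1 V2"])
       (use ct_fwd[OF adm n] ct_bwd[OF adm n] in auto)
next
  fix V1 V2 W1 W2 :: "'a set" and \<sigma> s
  assume a: "admissible V1 V2" "admissible W1 W2" "bij_betw \<sigma> V1 W1" "bij_betw \<sigma> V2 W2"
    "s \<in> fst (Ctimes (Suc n)) V1 V2"
  have inj: "inj_on \<sigma> (V1 \<union> V2)" and i1: "\<sigma> ` V1 = W1" and i2: "\<sigma> ` V2 = W2"
    using bij_inj_Un[OF a(2,3,4)] by auto
  have mc: "multichain_in (SPP V1 V2) (Suc n) s" and ne: "s \<noteq> []" and h: "hd s = mcross V1 V2"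
    using a(5) unfolding Ctimes_mem by auto
  define rest where "rest = tl s"
  have s_eq: "s = mcross V1 V2 # rest" using ne h unfolding rest_def by (cases s) auto
  have mcr: "multichain_in (SPP V1 V2) n rest" unfolding rest_def using mc_tl[OF mc] .
  have P0: "hd rest \<in> SPP V1 V2" using mc_hd_mem[OF mcr n] .
  define D where "D = decT rest"
  define U where "U = \<Union>(fst ` inrs D)"
  have UV: "U \<subseteq> V1 \<union> V2"
  proof
    fix y assume "y \<in> U"
    then obtain z where z: "z \<in> inrs D" "y \<in> fst z" unfolding U_def by blast
    obtain J c where zJ: "z = (J,c)" by (cases z)
    have "(J, Inr c) \<in> D" using z(1) zJ unfolding inrs_def by simp
    hence "J \<in> fst ` hd rest" unfolding D_def decT_mem by simp
    then obtain p where "(J,p) \<in> hd rest" by force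
    hence "J \<subseteq> V1 \<union> V2" using SPP_D(7)[OF P0] by blast
    thus "y \<in> V1 \<union> V2" using z(2) zJ by auto
  qed
  have dT: "decT (map (relP \<sigma>) rest) = comp_E_transport (sp_sum (Cbul n) (Ctimes n)) \<sigma> D"
    unfolding D_def using decT_nat[OF inj n mcr] .
  have U': "\<Union>(fst ` comp_E_transport (Ctimes n) \<sigma> (inrs D)) = \<sigma> ` U"
    unfolding fst_inrs_transport U_def by (simp add: image_Union)
  have int1: "\<sigma> ` U \<inter> W1 = \<sigma> ` (U \<inter> V1)" "\<sigma> ` U \<inter> W2 = \<sigma> ` (U \<inter> V2)"
    using inj_on_image_Int[OF inj UV, of V1] inj_on_image_Int[OF inj UV, of V2] i1 i2 by auto
  have sn: "snd (Ctimes (Suc n)) \<sigma> s = map (relP \<sigma>) s" by (simp add: Ctimes_def)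
  have tl: "tl (map (relP \<sigma>) s) = map (relP \<sigma>) rest" using s_eq by simp
  have L: "ctmap W1 W2 (snd (Ctimes (Suc n)) \<sigma> s) =
      ((\<sigma> ` (U \<inter> V1), \<sigma> ` (U \<inter> V2)), comp_E_transport (Ctimes n) \<sigma> (inrs D), comp_E_transport (Cbul n) \<sigma> (inls D))"
    unfolding ctmap_def Let_def sn tl dT inrs_transport inls_transport U' int1 ..
  have R0: "ctmap V1 V2 s = ((U \<inter> V1, U \<inter> V2), inrs D, inls D)"
    unfolding ctmap_def Let_def U_def D_def rest_def ..
  show "ctmap W1 W2 (snd (Ctimes (Suc n)) \<sigma> s) =
        snd (sp_prod (sp_comp_E1 (Ctimes n)) (sp_comp_E (Cbul n))) \<sigma> (ctmap V1 V2 s)"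
    unfolding L R0 by (simp add: sp_prod_def sp_comp_E_def sp_comp_E1_def)
qed

theorem iso_Ctimes:
  assumes k: "2 \<le> k"
  shows "species_iso (Ctimes k :: ('a, 'a spp list) species)
            (sp_prod (sp_comp_E1 (Ctimes (k - 1))) (sp_comp_E (Cbul (k - 1))))"
proof -
  obtain n where kn: "k = Suc n" and n: "0 < n" using k by (cases k) auto
  show ?thesis using iso_Ctimes_Suc[OF n] unfolding kn by simp
qed

theorem mainTheorem4:
  shows "(\<forall>k::nat. k \<ge> 2 \<longrightarrow>
            species_iso (Cbul k :: ('a, 'a spp list) species)
                        (sp_prod (Cbul (k - 1)) (sp_comp_E (sp_sum (Cbul (k - 1)) (Ctimes (k - 1))))) \<and>
            species_iso (Ctimes k :: ('a, 'a spp list) species)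
                        (sp_prod (sp_comp_E1 (Ctimes (k - 1))) (sp_comp_E (Cbul (k - 1)))) \<and>
            species_iso (Cell (k - 1) :: ('a, 'a spp \<times> 'a spp list) species)
                        (sp_sum (Cbul k) (Ctimes k))) \<and>
         (\<forall>k::nat. k \<ge> 1 \<longrightarrow>
            species_iso (Ck k :: ('a, 'a spp list) species)
                        (sp_comp_E1 (sp_sum (Cbul k) (Ctimes k))))"
  using iso_Cbul iso_Ctimes iso_Cell iso_Ck by blast

end
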